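(* Let $\mathcal{Q}$ be a small involutive quantaloid. For every $\mathcal{Q}$-category $\mathbb{A}$, the assignment $L_{\mathbb{A}}\colon(\mathbb{A}_{\mathsf s})_{\mathsf{sc}}\to(\mathbb{A}_{\mathsf{cc}})_{\mathsf s}$, $\phi\mapsto\mathbb{A}(-,S_{\mathbb{A}}-)\otimes\phi$, is a full embedding of $\mathcal{Q}$-categories (fully faithful and injective on objects), and these functors form a natural transformation $L\colon(-)_{\mathsf{sc}}\circ(-)_{\mathsf s}\Rightarrow(-)_{\mathsf s}\circ(-)_{\mathsf{cc}}$ of functors $\mathsf{Cat}(\mathcal{Q})\to\mathsf{SymCat}(\mathcal{Q})$. Moreover, for every $\mathcal{Q}$-category $\mathbb{A}$, $(\mathbb{A}_{\mathsf{cc}})_{\mathsf s}$ is symmetrically complete.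
   Context: A quantaloid is a category enriched in $\mathsf{Sup}$; an involution is an identity-on-objects, direction-reversing, monotone map $f\mapsto f^{\mathsf o}$ on morphisms with $(g\circ f)^{\mathsf o}=f^{\mathsf o}\circ g^{\mathsf o}$, $f^{\mathsf{oo}}=f$. A $\mathcal{Q}$-category $\mathbb{A}$: objects with types $tx$, homs $\mathbb{A}(y,x)\colon tx\to ty$ with $\mathbb{A}(z,y)\circ\mathbb{A}(y,x)\le\mathbb{A}(z,x)$, $1_{tx}\le\mathbb{A}(x,x)$; symmetric if $\mathbb{A}(x,y)=\mathbb{A}(y,x)^{\mathsf o}$. Functors: type-preserving $F$ with $\mathbb{A}(y,x)\le\mathbb{B}(Fy,Fx)$; categories $\mathsf{Cat}(\mathcal{Q})$ and (full) $\mathsf{SymCat}(\mathcal{Q})$. Symmetrisation: $\mathbb{A}_{\mathsf s}$ has the same objects and $\mathbb{A}_{\mathsf s}(y,x)=\mathbb{A}(y,x)\wedge\mathbb{A}(x,y)^{\mathsf o}$; $F_{\mathsf s}x=Fx$; $S_{\mathbb{A}}\colon\mathbb{A}_{\mathsf s}\to\mathbb{A}$ is the identity on objects. Distributors $\Phi\colon\mathbb{A}\to\mathbb{B}$: arrows $\Phi(y,x)\colon tx\to ty$ with $\mathbb{B}(y',y)\circ\Phi(y,x)\le\Phi(y',x)$, $\Phi(y,x)\circ\mathbb{A}(x,x')\le\Phi(y,x')$; composition $(\Psi\otimes\Phi)(z,x)=\bigvee_y\Psi(z,y)\circ\Phi(y,x)$; left adjoint with right adjoint $\Phi^*$ if $\mathbb{A}\le\Phi^*\otimes\Phi$,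 $\Phi\otimes\Phi^*\le\mathbb{B}$. A functor $F$ gives the distributor $\mathbb{B}(-,F-)$ (elements $\mathbb{B}(y,Fx)$); e.g. $\mathbb{A}(-,S_{\mathbb{A}}-)\colon\mathbb{A}_{\mathsf s}\to\mathbb{A}$ has elements $\mathbb{A}(y,x)$. For symmetric domain and codomain, $\Phi^{\mathsf o}(x,y)=\Phi(y,x)^{\mathsf o}$, and $\Phi$ is a symmetric left adjoint if left adjoint to $\Phi^{\mathsf o}$. $*_X$: one object of type $X$, hom $1_X$; presheaf: distributor $*_X\to\mathbb{A}$, representable if equal to $\mathbb{A}(-,a)$. Cauchy completion $\mathbb{A}_{\mathsf{cc}}$: objects the left adjoint presheaves $\phi\colon*_X\to\mathbb{A}$ (type $X$), hom the unique element of $\psi^*\otimes\phi$; $F_{\mathsf{cc}}(\phi)=\mathbb{B}(-,F-)\otimes\phi$. For symmetric $\mathbb{A}$, $\mathbb{A}_{\mathsf{sc}}$ is the full subcategory of $\mathbb{A}_{\mathsf{cc}}$ on symmetric left adjoint presheaves, and $F_{\mathsf{sc}}(\phi)=\mathbb{B}(-,F-)\otimes\phi$. A symmetric $\mathcal{Q}$-category is symmetrically complete if each of its symmetric left adjoint presheaves is representable. Naturality of $L$ means $(F_{\mathsf{cc}})_{\mathsf s}\circ L_{\mathbb{A}}=L_{\mathbb{B}}\circ(F_{\mathsf s})_{\mathsf{sc}}$ for every functor $F\colon\mathbb{A}\to\mathbb{B}$. *)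

theory Defs
  imports Main
begin

text \<open>A small quantaloid is given by a set of objects, a set of arrows with domain and
codomain, a partial order on each hom-set, joins of arbitrary subsets of each hom-set,
composition (qcomp g f = g after f) and identities.\<close>

record ('o, 'm) iquantaloid =
  qobj  :: "'o set"
  qarr  :: "'m set"
  qdom  :: "'m \<Rightarrow> 'o"
  qcod  :: "'m \<Rightarrow> 'o"
  qle   :: "'m \<Rightarrow> 'm \<Rightarrow> bool"
  qjoin :: "'o \<Rightarrow> 'o \<Rightarrow> 'm set \<Rightarrow> 'm"
  qcomp :: "'m \<Rightarrow> 'm \<Rightarrow> 'm"
  qid   :: "'o \<Rightarrow> 'm"
  qinv  :: "'m \<Rightarrow> 'm"

definition qhom :: "('o, 'm, 'z) iquantaloid_scheme \<Rightarrow> 'o \<Rightarrow> 'o \<Rightarrow> 'm set" where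
  "qhom Q X Y = {f \<in> qarr Q. qdom Q f = X \<and> qcod Q f = Y}"

definition iquantaloid :: "('o, 'm, 'z) iquantaloid_scheme \<Rightarrow> bool" where
  "iquantaloid Q \<longleftrightarrow>
     (\<forall>f\<in>qarr Q. qdom Q f \<in> qobj Q \<and> qcod Q f \<in> qobj Q)
   \<and> (\<forall>X\<in>qobj Q. \<forall>Y\<in>qobj Q.
        (\<forall>f\<in>qhom Q X Y. qle Q f f)
      \<and> (\<forall>f\<in>qhom Q X Y. \<forall>g\<in>qhom Q X Y. qle Q f g \<and> qle Q g f \<longrightarrow> f = g)
      \<and> (\<forall>f\<in>qhom Q X Y. \<forall>g\<in>qhom Q X Y. \<forall>h\<in>qhom Q X Y.
            qle Q f g \<and> qle Q g h \<longrightarrow> qle Q f h))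
   \<and> (\<forall>X\<in>qobj Q. \<forall>Y\<in>qobj Q. \<forall>S. S \<subseteq> qhom Q X Y \<longrightarrow>
        qjoin Q X Y S \<in> qhom Q X Y
      \<and> (\<forall>s\<in>S. qle Q s (qjoin Q X Y S))
      \<and> (\<forall>u\<in>qhom Q X Y. (\<forall>s\<in>S. qle Q s u) \<longrightarrow> qle Q (qjoin Q X Y S) u))
   \<and> (\<forall>X\<in>qobj Q. qid Q X \<in> qhom Q X X)
   \<and> (\<forall>X\<in>qobj Q. \<forall>Y\<in>qobj Q. \<forall>Z\<in>qobj Q. \<forall>f\<in>qhom Q X Y. \<forall>g\<in>qhom Q Y Z.
        qcomp Q g f \<in> qhom Q X Z)
   \<and> (\<forall>W\<in>qobj Q. \<forall>X\<in>qobj Q. \<forall>Y\<in>qobj Q. \<forall>Z\<in>qobj Q.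
        \<forall>f\<in>qhom Q W X. \<forall>g\<in>qhom Q X Y. \<forall>h\<in>qhom Q Y Z.
        qcomp Q h (qcomp Q g f) = qcomp Q (qcomp Q h g) f)
   \<and> (\<forall>X\<in>qobj Q. \<forall>Y\<in>qobj Q. \<forall>f\<in>qhom Q X Y.
        qcomp Q f (qid Q X) = f \<and> qcomp Q (qid Q Y) f = f)
   \<and> (\<forall>X\<in>qobj Q. \<forall>Y\<in>qobj Q. \<forall>Z\<in>qobj Q.
        (\<forall>f\<in>qhom Q X Y. \<forall>S. S \<subseteq> qhom Q Y Z \<longrightarrow>
           qcomp Q (qjoin Q Y Z S) f = qjoin Q X Z ((\<lambda>g. qcomp Q g f) ` S))
      \<and> (\<forall>g\<in>qhom Q Y Z. \<forall>S. S \<subseteq> qhom Q X Y \<longrightarrow>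
           qcomp Q g (qjoin Q X Y S) = qjoin Q X Z ((\<lambda>f. qcomp Q g f) ` S)))
   \<and> (\<forall>X\<in>qobj Q. \<forall>Y\<in>qobj Q. \<forall>f\<in>qhom Q X Y.
        qinv Q f \<in> qhom Q Y X \<and> qinv Q (qinv Q f) = f)
   \<and> (\<forall>X\<in>qobj Q. \<forall>Y\<in>qobj Q. \<forall>f\<in>qhom Q X Y. \<forall>g\<in>qhom Q X Y.
        qle Q f g \<longrightarrow> qle Q (qinv Q f) (qinv Q g))
   \<and> (\<forall>X\<in>qobj Q. \<forall>Y\<in>qobj Q. \<forall>Z\<in>qobj Q. \<forall>f\<in>qhom Q X Y. \<forall>g\<in>qhom Q Y Z.
        qinv Q (qcomp Q g f) = qcomp Q (qinv Q f) (qinv Q g))"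

definition qmeet :: "('o, 'm, 'z) iquantaloid_scheme \<Rightarrow> 'o \<Rightarrow> 'o \<Rightarrow> 'm \<Rightarrow> 'm \<Rightarrow> 'm" where
  "qmeet Q X Y a b = qjoin Q X Y {c \<in> qhom Q X Y. qle Q c a \<and> qle Q c b}"

text \<open>chom A y x is the hom A(y,x) : t x \<rightarrow> t y.\<close>
record ('a, 'o, 'm) qcat =
  cobj  :: "'a set"
  ctype :: "'a \<Rightarrow> 'o"
  chom  :: "'a \<Rightarrow> 'a \<Rightarrow> 'm"

definition qcat :: "('o, 'm, 'z) iquantaloid_scheme \<Rightarrow> ('a, 'o, 'm) qcat \<Rightarrow> bool" where
  "qcat Q A \<longleftrightarrow>
     (\<forall>x\<in>cobj A. ctype A x \<in> qobj Q)
   \<and> (\<forall>x\<in>cobj A. \<forall>y\<in>cobj A. chom A y x \<in> qhom Q (ctype A x) (ctype A y))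
   \<and> (\<forall>x\<in>cobj A. \<forall>y\<in>cobj A. \<forall>z\<in>cobj A.
        qle Q (qcomp Q (chom A z y) (chom A y x)) (chom A z x))
   \<and> (\<forall>x\<in>cobj A. qle Q (qid Q (ctype A x)) (chom A x x))"

definition sym_qcat :: "('o, 'm, 'z) iquantaloid_scheme \<Rightarrow> ('a, 'o, 'm) qcat \<Rightarrow> bool" where
  "sym_qcat Q A \<longleftrightarrow> (\<forall>x\<in>cobj A. \<forall>y\<in>cobj A. chom A x y = qinv Q (chom A y x))"

definition qfunctor :: "('o, 'm, 'z) iquantaloid_scheme \<Rightarrow> ('a, 'o, 'm) qcat \<Rightarrow> ('b, 'o, 'm) qcat
    \<Rightarrow> ('a \<Rightarrow> 'b) \<Rightarrow> bool" where
  "qfunctor Q A B F \<longleftrightarrow>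
     (\<forall>x\<in>cobj A. F x \<in> cobj B \<and> ctype B (F x) = ctype A x)
   \<and> (\<forall>x\<in>cobj A. \<forall>y\<in>cobj A. qle Q (chom A y x) (chom B (F y) (F x)))"

definition full_embedding :: "('o, 'm, 'z) iquantaloid_scheme \<Rightarrow> ('a, 'o, 'm) qcat \<Rightarrow> ('b, 'o, 'm) qcat
    \<Rightarrow> ('a \<Rightarrow> 'b) \<Rightarrow> bool" where
  "full_embedding Q A B F \<longleftrightarrow>
     qfunctor Q A B F
   \<and> (\<forall>x\<in>cobj A. \<forall>y\<in>cobj A. chom B (F y) (F x) = chom A y x)
   \<and> inj_on F (cobj A)"

definition symz :: "('o, 'm, 'z) iquantaloid_scheme \<Rightarrow> ('a, 'o, 'm) qcat \<Rightarrow> ('a, 'o, 'm) qcat" where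
  "symz Q A = \<lparr> cobj = cobj A, ctype = ctype A,
     chom = (\<lambda>y x. qmeet Q (ctype A x) (ctype A y) (chom A y x) (qinv Q (chom A x y))) \<rparr>"

text \<open>Distributors \<Phi> : A \<rightarrow> B, with elements \<Phi> y x : t x \<rightarrow> t y (x in A, y in B).\<close>
definition distributor :: "('o, 'm, 'z) iquantaloid_scheme \<Rightarrow> ('a, 'o, 'm) qcat \<Rightarrow> ('b, 'o, 'm) qcat
    \<Rightarrow> ('b \<Rightarrow> 'a \<Rightarrow> 'm) \<Rightarrow> bool" where
  "distributor Q A B \<Phi> \<longleftrightarrow>
     (\<forall>x\<in>cobj A. \<forall>y\<in>cobj B. \<Phi> y x \<in> qhom Q (ctype A x) (ctype B y))
   \<and> (\<forall>x\<in>cobj A. \<forall>y\<in>cobj B. \<forall>y'\<in>cobj B. qle Q (qcomp Q (chom B y' y) (\<Phi> y x)) (\<Phi> y' x))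
   \<and> (\<forall>x\<in>cobj A. \<forall>x'\<in>cobj A. \<forall>y\<in>cobj B. qle Q (qcomp Q (\<Phi> y x) (chom A x x')) (\<Phi> y x'))"

definition dcomp :: "('o, 'm, 'z) iquantaloid_scheme \<Rightarrow> ('a, 'o, 'm) qcat \<Rightarrow> ('b, 'o, 'm) qcat
    \<Rightarrow> ('c, 'o, 'm) qcat \<Rightarrow> ('c \<Rightarrow> 'b \<Rightarrow> 'm) \<Rightarrow> ('b \<Rightarrow> 'a \<Rightarrow> 'm) \<Rightarrow> 'c \<Rightarrow> 'a \<Rightarrow> 'm" where
  "dcomp Q A B C \<Psi> \<Phi> z x =
     qjoin Q (ctype A x) (ctype C z) ((\<lambda>y. qcomp Q (\<Psi> z y) (\<Phi> y x)) ` cobj B)"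

definition left_adjoint_to :: "('o, 'm, 'z) iquantaloid_scheme \<Rightarrow> ('a, 'o, 'm) qcat \<Rightarrow> ('b, 'o, 'm) qcat
    \<Rightarrow> ('b \<Rightarrow> 'a \<Rightarrow> 'm) \<Rightarrow> ('a \<Rightarrow> 'b \<Rightarrow> 'm) \<Rightarrow> bool" where
  "left_adjoint_to Q A B \<Phi> \<Psi> \<longleftrightarrow>
     distributor Q A B \<Phi> \<and> distributor Q B A \<Psi>
   \<and> (\<forall>x\<in>cobj A. \<forall>x'\<in>cobj A. qle Q (chom A x' x) (dcomp Q A B A \<Psi> \<Phi> x' x))
   \<and> (\<forall>y\<in>cobj B. \<forall>y'\<in>cobj B. qle Q (dcomp Q B A B \<Phi> \<Psi> y' y) (chom B y' y))"

definition dual_dist :: "('o, 'm, 'z) iquantaloid_scheme \<Rightarrow> ('b \<Rightarrow> 'a \<Rightarrow> 'm) \<Rightarrow> ('a \<Rightarrow> 'b \<Rightarrow> 'm)" where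
  "dual_dist Q \<Phi> = (\<lambda>x y. qinv Q (\<Phi> y x))"

definition unit_cat :: "('o, 'm, 'z) iquantaloid_scheme \<Rightarrow> 'o \<Rightarrow> (unit, 'o, 'm) qcat" where
  "unit_cat Q X = \<lparr> cobj = {()}, ctype = (\<lambda>_. X), chom = (\<lambda>_ _. qid Q X) \<rparr>"

text \<open>A presheaf \<phi> : *_X \<rightarrow> A is represented by the pair (X, \<phi>) with \<phi> y = \<phi>(y,*),
  extensional (undefined) outside the objects of A.\<close>

definition as_dist :: "('a \<Rightarrow> 'm) \<Rightarrow> ('a \<Rightarrow> unit \<Rightarrow> 'm)" where
  "as_dist \<phi> = (\<lambda>y _. \<phi> y)"

definition left_adj_presheaf :: "('o, 'm, 'z) iquantaloid_scheme \<Rightarrow> ('a, 'o, 'm) qcat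
    \<Rightarrow> 'o \<Rightarrow> ('a \<Rightarrow> 'm) \<Rightarrow> bool" where
  "left_adj_presheaf Q A X \<phi> \<longleftrightarrow> (\<exists>\<Psi>. left_adjoint_to Q (unit_cat Q X) A (as_dist \<phi>) \<Psi>)"

definition sym_left_adj_presheaf :: "('o, 'm, 'z) iquantaloid_scheme \<Rightarrow> ('a, 'o, 'm) qcat
    \<Rightarrow> 'o \<Rightarrow> ('a \<Rightarrow> 'm) \<Rightarrow> bool" where
  "sym_left_adj_presheaf Q A X \<phi> \<longleftrightarrow>
     left_adjoint_to Q (unit_cat Q X) A (as_dist \<phi>) (dual_dist Q (as_dist \<phi>))"

definition right_adj :: "('o, 'm, 'z) iquantaloid_scheme \<Rightarrow> ('a, 'o, 'm) qcat
    \<Rightarrow> 'o \<Rightarrow> ('a \<Rightarrow> 'm) \<Rightarrow> (unit \<Rightarrow> 'a \<Rightarrow> 'm)" where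
  "right_adj Q A X \<phi> = (SOME \<Psi>. left_adjoint_to Q (unit_cat Q X) A (as_dist \<phi>) \<Psi>)"

definition extensional_on :: "'a set \<Rightarrow> ('a \<Rightarrow> 'm) \<Rightarrow> bool" where
  "extensional_on S f \<longleftrightarrow> (\<forall>y. y \<notin> S \<longrightarrow> f y = undefined)"

text \<open>Hom of the Cauchy completion: the unique element of psi-star \<otimes> \<phi>.\<close>
definition cc_hom :: "('o, 'm, 'z) iquantaloid_scheme \<Rightarrow> ('a, 'o, 'm) qcat
    \<Rightarrow> 'o \<times> ('a \<Rightarrow> 'm) \<Rightarrow> 'o \<times> ('a \<Rightarrow> 'm) \<Rightarrow> 'm" where
  "cc_hom Q A p q = dcomp Q (unit_cat Q (fst q)) A (unit_cat Q (fst p))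
       (right_adj Q A (fst p) (snd p)) (as_dist (snd q)) () ()"

definition cauchy :: "('o, 'm, 'z) iquantaloid_scheme \<Rightarrow> ('a, 'o, 'm) qcat
    \<Rightarrow> ('o \<times> ('a \<Rightarrow> 'm), 'o, 'm) qcat" where
  "cauchy Q A = \<lparr> cobj = {(X, \<phi>). X \<in> qobj Q \<and> extensional_on (cobj A) \<phi>
                                 \<and> left_adj_presheaf Q A X \<phi>},
                  ctype = fst, chom = cc_hom Q A \<rparr>"

text \<open>Symmetric completion A_sc (meant for symmetric A): full subcategory of A_cc on the
  symmetric left adjoint presheaves.\<close>
definition symcomp :: "('o, 'm, 'z) iquantaloid_scheme \<Rightarrow> ('a, 'o, 'm) qcat
    \<Rightarrow> ('o \<times> ('a \<Rightarrow> 'm), 'o, 'm) qcat" where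
  "symcomp Q A = \<lparr> cobj = {p \<in> cobj (cauchy Q A). sym_left_adj_presheaf Q A (fst p) (snd p)},
                   ctype = fst, chom = cc_hom Q A \<rparr>"

definition pres_comp :: "('o, 'm, 'z) iquantaloid_scheme \<Rightarrow> ('a, 'o, 'm) qcat \<Rightarrow> ('b, 'o, 'm) qcat
    \<Rightarrow> ('b \<Rightarrow> 'a \<Rightarrow> 'm) \<Rightarrow> 'o \<times> ('a \<Rightarrow> 'm) \<Rightarrow> 'o \<times> ('b \<Rightarrow> 'm)" where
  "pres_comp Q A B \<Phi> p = (fst p, (\<lambda>b. if b \<in> cobj B
       then dcomp Q (unit_cat Q (fst p)) A B \<Phi> (as_dist (snd p)) b () else undefined))"

text \<open>F_cc (also F_sc when A, B are symmetric): \<phi> \<mapsto> B(-,F-) \<otimes> \<phi>.\<close>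
definition cc_map :: "('o, 'm, 'z) iquantaloid_scheme \<Rightarrow> ('a, 'o, 'm) qcat \<Rightarrow> ('b, 'o, 'm) qcat
    \<Rightarrow> ('a \<Rightarrow> 'b) \<Rightarrow> 'o \<times> ('a \<Rightarrow> 'm) \<Rightarrow> 'o \<times> ('b \<Rightarrow> 'm)" where
  "cc_map Q A B F = pres_comp Q A B (\<lambda>b a. chom B b (F a))"

definition Lmap :: "('o, 'm, 'z) iquantaloid_scheme \<Rightarrow> ('a, 'o, 'm) qcat
    \<Rightarrow> 'o \<times> ('a \<Rightarrow> 'm) \<Rightarrow> 'o \<times> ('a \<Rightarrow> 'm)" where
  "Lmap Q A = pres_comp Q (symz Q A) A (\<lambda>y x. chom A y x)"

definition sym_complete :: "('o, 'm, 'z) iquantaloid_scheme \<Rightarrow> ('a, 'o, 'm) qcat \<Rightarrow> bool" where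
  "sym_complete Q A \<longleftrightarrow>
     (\<forall>X\<in>qobj Q. \<forall>\<phi>. sym_left_adj_presheaf Q A X \<phi> \<longrightarrow>
        (\<exists>a\<in>cobj A. ctype A a = X \<and> (\<forall>y\<in>cobj A. \<phi> y = chom A y a)))"

end

theory Submission
  imports Defs
begin
locale IQ = fixes Q :: "('o,'m,'z) iquantaloid_scheme" assumes iq: "iquantaloid Q"
begin

abbreviation arr where "arr f \<equiv> f \<in> qarr Q"
abbreviation dm where "dm f \<equiv> qdom Q f"
abbreviation cd where "cd f \<equiv> qcod Q f"
abbreviation cp where "cp g f \<equiv> qcomp Q g f"
abbreviation one where "one X \<equiv> qid Q X"
abbreviation iv where "iv f \<equiv> qinv Q f"
abbreviation J where "J X Y S \<equiv> qjoin Q X Y S"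
abbreviation Ob where "Ob \<equiv> qobj Q"

lemma qhom_iff: "f \<in> qhom Q X Y \<longleftrightarrow> arr f \<and> dm f = X \<and> cd f = Y"
  by (simp add: qhom_def)

lemma c_objs: "\<forall>f\<in>qarr Q. dm f \<in> Ob \<and> cd f \<in> Ob"
  using iq unfolding iquantaloid_def by (elim conjE) assumption
lemma c_one: "\<forall>X\<in>Ob. one X \<in> qhom Q X X"
  using iq unfolding iquantaloid_def by (elim conjE) assumption
lemma c_cp: "\<forall>X\<in>Ob. \<forall>Y\<in>Ob. \<forall>Z\<in>Ob. \<forall>f\<in>qhom Q X Y. \<forall>g\<in>qhom Q Y Z. cp g f \<in> qhom Q X Z"
  using iq unfolding iquantaloid_def by (elim conjE) assumption
lemma c_assoc: "\<forall>W\<in>Ob. \<forall>X\<in>Ob. \<forall>Y\<in>Ob. \<forall>Z\<in>Ob.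
        \<forall>f\<in>qhom Q W X. \<forall>g\<in>qhom Q X Y. \<forall>h\<in>qhom Q Y Z.
        cp h (cp g f) = cp (cp h g) f"
  using iq unfolding iquantaloid_def by (elim conjE) assumption
lemma c_id: "\<forall>X\<in>Ob. \<forall>Y\<in>Ob. \<forall>f\<in>qhom Q X Y. cp f (one X) = f \<and> cp (one Y) f = f"
  using iq unfolding iquantaloid_def by (elim conjE) assumption
lemma c_iv: "\<forall>X\<in>Ob. \<forall>Y\<in>Ob. \<forall>f\<in>qhom Q X Y. iv f \<in> qhom Q Y X \<and> iv (iv f) = f"
  using iq unfolding iquantaloid_def by (elim conjE) assumption
lemma c_ivmono: "\<forall>X\<in>Ob. \<forall>Y\<in>Ob. \<forall>f\<in>qhom Q X Y. \<forall>g\<in>qhom Q X Y.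
        qle Q f g \<longrightarrow> qle Q (iv f) (iv g)"
  using iq unfolding iquantaloid_def by (elim conjE) assumption
lemma c_ivcp: "\<forall>X\<in>Ob. \<forall>Y\<in>Ob. \<forall>Z\<in>Ob. \<forall>f\<in>qhom Q X Y. \<forall>g\<in>qhom Q Y Z.
        iv (cp g f) = cp (iv f) (iv g)"
  using iq unfolding iquantaloid_def by (elim conjE) assumption
lemma c_order: "\<forall>X\<in>Ob. \<forall>Y\<in>Ob.
        (\<forall>f\<in>qhom Q X Y. qle Q f f)
      \<and> (\<forall>f\<in>qhom Q X Y. \<forall>g\<in>qhom Q X Y. qle Q f g \<and> qle Q g f \<longrightarrow> f = g)
      \<and> (\<forall>f\<in>qhom Q X Y. \<forall>g\<in>qhom Q X Y. \<forall>h\<in>qhom Q X Y.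
            qle Q f g \<and> qle Q g h \<longrightarrow> qle Q f h)"
  using iq unfolding iquantaloid_def by (elim conjE) assumption
lemma c_join: "\<forall>X\<in>Ob. \<forall>Y\<in>Ob. \<forall>S. S \<subseteq> qhom Q X Y \<longrightarrow>
        J X Y S \<in> qhom Q X Y
      \<and> (\<forall>s\<in>S. qle Q s (J X Y S))
      \<and> (\<forall>u\<in>qhom Q X Y. (\<forall>s\<in>S. qle Q s u) \<longrightarrow> qle Q (J X Y S) u)"
  using iq unfolding iquantaloid_def by (elim conjE) assumption
lemma c_distr: "\<forall>X\<in>Ob. \<forall>Y\<in>Ob. \<forall>Z\<in>Ob.
        (\<forall>f\<in>qhom Q X Y. \<forall>S. S \<subseteq> qhom Q Y Z \<longrightarrow>
           cp (J Y Z S) f = J X Z ((\<lambda>g. cp g f) ` S))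
      \<and> (\<forall>g\<in>qhom Q Y Z. \<forall>S. S \<subseteq> qhom Q X Y \<longrightarrow>
           cp g (J X Y S) = J X Z ((\<lambda>f. cp g f) ` S))"
  using iq unfolding iquantaloid_def by (elim conjE) assumption

lemma arr_objs[simp]: "arr f \<Longrightarrow> dm f \<in> Ob" "arr f \<Longrightarrow> cd f \<in> Ob"
  using c_objs by auto

lemma cp_arr_all: "arr f \<Longrightarrow> arr g \<Longrightarrow> cd f = dm g \<Longrightarrow> cp g f \<in> qhom Q (dm f) (cd g)"
  using c_cp[rule_format, of "dm f" "cd f" "cd g" f g] by (simp add: qhom_iff)

lemma cp_arr[simp]:
  "arr f \<Longrightarrow> arr g \<Longrightarrow> cd f = dm g \<Longrightarrow> arr (cp g f)"
  "arr f \<Longrightarrow> arr g \<Longrightarrow> cd f = dm g \<Longrightarrow> dm (cp g f) = dm f"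
  "arr f \<Longrightarrow> arr g \<Longrightarrow> cd f = dm g \<Longrightarrow> cd (cp g f) = cd g"
  using cp_arr_all by (auto simp: qhom_iff)

lemma one_arr[simp]: "X \<in> Ob \<Longrightarrow> arr (one X)" "X \<in> Ob \<Longrightarrow> dm (one X) = X" "X \<in> Ob \<Longrightarrow> cd (one X) = X"
  using c_one by (auto simp: qhom_iff)

lemma iv_all: "arr f \<Longrightarrow> iv f \<in> qhom Q (cd f) (dm f) \<and> iv (iv f) = f"
  using c_iv[rule_format, of "dm f" "cd f" f] by (simp add: qhom_iff)

lemma iv_arr[simp]: "arr f \<Longrightarrow> arr (iv f)" "arr f \<Longrightarrow> dm (iv f) = cd f" "arr f \<Longrightarrow> cd (iv f) = dm f"
  "arr f \<Longrightarrow> iv (iv f) = f"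
  using iv_all by (auto simp: qhom_iff)

lemma assoc: "arr f \<Longrightarrow> arr g \<Longrightarrow> arr h \<Longrightarrow> cd f = dm g \<Longrightarrow> cd g = dm h \<Longrightarrow>
   cp h (cp g f) = cp (cp h g) f"
  using c_assoc[rule_format, of "dm f" "cd f" "cd g" "cd h" f g h] by (simp add: qhom_iff)

lemma id_lr[simp]: "arr f \<Longrightarrow> cd f = Y \<Longrightarrow> cp (one Y) f = f"
  "arr f \<Longrightarrow> dm f = X \<Longrightarrow> cp f (one X) = f"
  using c_id[rule_format, of "dm f" "cd f" f] by (auto simp: qhom_iff)

lemma iv_cp: "arr f \<Longrightarrow> arr g \<Longrightarrow> cd f = dm g \<Longrightarrow> iv (cp g f) = cp (iv f) (iv g)"
  using c_ivcp[rule_format, of "dm f" "cd f" "cd g" f g] by (simp add: qhom_iff)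

lemma iv_one[simp]: "X \<in> Ob \<Longrightarrow> iv (one X) = one X"
proof -
  assume X: "X \<in> Ob"
  have a: "arr (one X)" using X by simp
  have e1: "cp (iv (one X)) (one X) = iv (one X)" using X by simp
  have "iv (cp (iv (one X)) (one X)) = cp (iv (one X)) (iv (iv (one X)))"
    by (rule iv_cp) (simp_all add: X)
  also have "\<dots> = cp (iv (one X)) (one X)" by (simp only: iv_arr(4)[OF a])
  also have "\<dots> = iv (one X)" by (rule e1)
  finally have "iv (cp (iv (one X)) (one X)) = iv (one X)" .
  then have "iv (iv (one X)) = iv (one X)" by (simp only: e1)
  then have "one X = iv (one X)" by (simp only: iv_arr(4)[OF a])
  then show ?thesis by (rule sym)
qed

definition LE where "LE f g \<longleftrightarrow> arr f \<and> arr g \<and> dm f = dm g \<and> cd f = cd g \<and> qle Q f g"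

lemma LE_arr: "LE f g \<Longrightarrow> arr f" "LE f g \<Longrightarrow> arr g" "LE f g \<Longrightarrow> dm f = dm g" "LE f g \<Longrightarrow> cd f = cd g"
  by (auto simp: LE_def)

lemma order_all: assumes "X \<in> Ob" "Y \<in> Ob" shows "(\<forall>f\<in>qhom Q X Y. qle Q f f)
      \<and> (\<forall>f\<in>qhom Q X Y. \<forall>g\<in>qhom Q X Y. qle Q f g \<and> qle Q g f \<longrightarrow> f = g)
      \<and> (\<forall>f\<in>qhom Q X Y. \<forall>g\<in>qhom Q X Y. \<forall>h\<in>qhom Q X Y.
            qle Q f g \<and> qle Q g h \<longrightarrow> qle Q f h)"
  using bspec[OF bspec[OF c_order assms(1)] assms(2)] .

lemma o_refl: "X \<in> Ob \<Longrightarrow> Y \<in> Ob \<Longrightarrow> f \<in> qhom Q X Y \<Longrightarrow> qle Q f f"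
proof -
  assume a: "X \<in> Ob" "Y \<in> Ob" "f \<in> qhom Q X Y"
  have "\<forall>f\<in>qhom Q X Y. qle Q f f"
    using order_all[OF a(1,2)] by (elim conjE)
  then show ?thesis using a(3) by blast
qed
lemma o_anti: "X \<in> Ob \<Longrightarrow> Y \<in> Ob \<Longrightarrow> f \<in> qhom Q X Y \<Longrightarrow> g \<in> qhom Q X Y \<Longrightarrow> qle Q f g \<Longrightarrow> qle Q g f \<Longrightarrow> f = g"
proof -
  assume a: "X \<in> Ob" "Y \<in> Ob" "f \<in> qhom Q X Y" "g \<in> qhom Q X Y" "qle Q f g" "qle Q g f"
  have "\<forall>f\<in>qhom Q X Y. \<forall>g\<in>qhom Q X Y. qle Q f g \<and> qle Q g f \<longrightarrow> f = g"
    using order_all[OF a(1,2)] by (elim conjE)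
  then show ?thesis using a(3-6) by blast
qed
lemma o_trans: "X \<in> Ob \<Longrightarrow> Y \<in> Ob \<Longrightarrow> f \<in> qhom Q X Y \<Longrightarrow> g \<in> qhom Q X Y \<Longrightarrow> h \<in> qhom Q X Y \<Longrightarrow>
   qle Q f g \<Longrightarrow> qle Q g h \<Longrightarrow> qle Q f h"
proof -
  assume a: "X \<in> Ob" "Y \<in> Ob" "f \<in> qhom Q X Y" "g \<in> qhom Q X Y" "h \<in> qhom Q X Y" "qle Q f g" "qle Q g h"
  have "\<forall>f\<in>qhom Q X Y. \<forall>g\<in>qhom Q X Y. \<forall>h\<in>qhom Q X Y. qle Q f g \<and> qle Q g h \<longrightarrow> qle Q f h"
    using order_all[OF a(1,2)] by (elim conjE)
  then show ?thesis using a(3-7) by blast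
qed

lemma LE_refl: "arr f \<Longrightarrow> LE f f"
  unfolding LE_def using o_refl[of "dm f" "cd f" f] by (simp add: qhom_iff)

lemma LE_antisym: "LE f g \<Longrightarrow> LE g f \<Longrightarrow> f = g"
  unfolding LE_def using o_anti[of "dm f" "cd f" f g] by (simp add: qhom_iff)

lemma LE_trans[trans]: "LE f g \<Longrightarrow> LE g h \<Longrightarrow> LE f h"
  unfolding LE_def using o_trans[of "dm f" "cd f" f g h] by (simp add: qhom_iff)

lemma LE_eq_trans[trans]: "LE f g \<Longrightarrow> g = h \<Longrightarrow> LE f h" "f = g \<Longrightarrow> LE g h \<Longrightarrow> LE f h" by auto

lemma join_all: assumes "X \<in> Ob" "Y \<in> Ob" "S \<subseteq> qhom Q X Y" shows
        "J X Y S \<in> qhom Q X Y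
      \<and> (\<forall>s\<in>S. qle Q s (J X Y S))
      \<and> (\<forall>u\<in>qhom Q X Y. (\<forall>s\<in>S. qle Q s u) \<longrightarrow> qle Q (J X Y S) u)"
  using mp[OF spec[OF bspec[OF bspec[OF c_join assms(1)] assms(2)], of S] assms(3)] .

definition homs where "homs X Y S \<longleftrightarrow> (\<forall>s\<in>S. arr s \<and> dm s = X \<and> cd s = Y)"

lemma homs_sub: "homs X Y S \<longleftrightarrow> S \<subseteq> qhom Q X Y" by (auto simp: homs_def qhom_iff)

lemma J_arr[simp]: "X \<in> Ob \<Longrightarrow> Y \<in> Ob \<Longrightarrow> homs X Y S \<Longrightarrow> arr (J X Y S)"
  "X \<in> Ob \<Longrightarrow> Y \<in> Ob \<Longrightarrow> homs X Y S \<Longrightarrow> dm (J X Y S) = X"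
  "X \<in> Ob \<Longrightarrow> Y \<in> Ob \<Longrightarrow> homs X Y S \<Longrightarrow> cd (J X Y S) = Y"
  using join_all[of X Y S] by (auto simp: homs_sub qhom_iff)

lemma J_upper: "X \<in> Ob \<Longrightarrow> Y \<in> Ob \<Longrightarrow> homs X Y S \<Longrightarrow> s \<in> S \<Longrightarrow> LE s (J X Y S)"
  using join_all[of X Y S] by (auto simp: homs_sub LE_def qhom_iff)

lemma J_least: "X \<in> Ob \<Longrightarrow> Y \<in> Ob \<Longrightarrow> homs X Y S \<Longrightarrow> (\<And>s. s \<in> S \<Longrightarrow> LE s u) \<Longrightarrow>
   arr u \<Longrightarrow> dm u = X \<Longrightarrow> cd u = Y \<Longrightarrow> LE (J X Y S) u"
  using join_all[of X Y S] by (auto simp: homs_sub LE_def qhom_iff)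

lemma homs_img[simp]: "homs X Y (f ` I) \<longleftrightarrow> (\<forall>i\<in>I. arr (f i) \<and> dm (f i) = X \<and> cd (f i) = Y)"
  by (auto simp: homs_def)
lemma homs_ins[simp]: "homs X Y (insert a S) \<longleftrightarrow> arr a \<and> dm a = X \<and> cd a = Y \<and> homs X Y S"
  by (auto simp: homs_def)
lemma homs_empty[simp]: "homs X Y {}" by (auto simp: homs_def)

lemma J_single: "arr f \<Longrightarrow> J (dm f) (cd f) {f} = f"
  apply (rule LE_antisym)
   apply (rule J_least) apply (auto intro: LE_refl)
  apply (rule J_upper) apply auto
  done

lemma distr_all: assumes "X \<in> Ob" "Y \<in> Ob" "Z \<in> Ob" shows "
        (\<forall>f\<in>qhom Q X Y. \<forall>S. S \<subseteq> qhom Q Y Z \<longrightarrow>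
           cp (J Y Z S) f = J X Z ((\<lambda>g. cp g f) ` S))
      \<and> (\<forall>g\<in>qhom Q Y Z. \<forall>S. S \<subseteq> qhom Q X Y \<longrightarrow>
           cp g (J X Y S) = J X Z ((\<lambda>f. cp g f) ` S))"
  using bspec[OF bspec[OF bspec[OF c_distr assms(1)] assms(2)] assms(3)] .

lemma cp_J_l: "arr f \<Longrightarrow> Z \<in> Ob \<Longrightarrow> homs (cd f) Z S \<Longrightarrow>
   cp (J (cd f) Z S) f = J (dm f) Z ((\<lambda>g. cp g f) ` S)"
  using distr_all[of "dm f" "cd f" Z] by (auto simp: homs_sub qhom_iff)

lemma cp_J_r: "arr g \<Longrightarrow> X \<in> Ob \<Longrightarrow> homs X (dm g) S \<Longrightarrow>
   cp g (J X (dm g) S) = J X (cd g) ((\<lambda>f. cp g f) ` S)"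
  using distr_all[of X "dm g" "cd g"] by (auto simp: homs_sub qhom_iff)

lemma LE_cp_l: "LE f f' \<Longrightarrow> arr g \<Longrightarrow> cd f = dm g \<Longrightarrow> LE (cp g f) (cp g f')"
proof -
  assume a: "LE f f'" "arr g" "cd f = dm g"
  note b = LE_arr[OF a(1)]
  have j: "J (dm f) (cd f) {f, f'} = f'"
    apply (rule LE_antisym)
     apply (rule J_least) using a b apply (auto intro: LE_refl)
    apply (rule J_upper) using b by auto
  have "cp g f' = J (dm f) (cd g) ((\<lambda>f. cp g f) ` {f, f'})"
    using cp_J_r[of g "dm f" "{f,f'}"] a b j by auto
  then show ?thesis using J_upper[of "dm f" "cd g" "(\<lambda>f. cp g f) ` {f, f'}" "cp g f"] a b by auto
qed

lemma LE_cp_r: "LE f f' \<Longrightarrow> arr g \<Longrightarrow> cd g = dm f \<Longrightarrow> LE (cp f g) (cp f' g)"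
proof -
  assume a: "LE f f'" "arr g" "cd g = dm f"
  note b = LE_arr[OF a(1)]
  have j: "J (dm f) (cd f) {f, f'} = f'"
    apply (rule LE_antisym)
     apply (rule J_least) using a b apply (auto intro: LE_refl)
    apply (rule J_upper) using b by auto
  have "cp f' g = J (dm g) (cd f) ((\<lambda>f. cp f g) ` {f, f'})"
    using cp_J_l[of g "cd f" "{f,f'}"] a b j by auto
  then show ?thesis using J_upper[of "dm g" "cd f" "(\<lambda>f. cp f g) ` {f, f'}" "cp f g"] a b by auto
qed

lemma LE_cp: "LE f f' \<Longrightarrow> LE g g' \<Longrightarrow> cd f = dm g \<Longrightarrow> LE (cp g f) (cp g' f')"
  by (metis LE_arr LE_cp_l LE_cp_r LE_trans)

lemma LE_iv: "LE f g \<Longrightarrow> LE (iv f) (iv g)"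
proof -
  assume a: "LE f g"
  have "\<forall>X\<in>Ob. \<forall>Y\<in>Ob. \<forall>f\<in>qhom Q X Y. \<forall>g\<in>qhom Q X Y.
        qle Q f g \<longrightarrow> qle Q (iv f) (iv g)"
    using c_ivmono by blast
  have "qle Q (iv f) (iv g)"
    by (rule c_ivmono[rule_format, of "dm f" "cd f"]) (use a in \<open>auto simp: LE_def qhom_iff\<close>)
  then show ?thesis using a by (auto simp: LE_def)
qed

lemma LE_iv_iff: "arr f \<Longrightarrow> arr g \<Longrightarrow> LE (iv f) (iv g) \<longleftrightarrow> LE f g"
  using LE_iv[of "iv f" "iv g"] LE_iv[of f g] by auto

lemma iv_J: "X \<in> Ob \<Longrightarrow> Y \<in> Ob \<Longrightarrow> homs X Y S \<Longrightarrow> iv (J X Y S) = J Y X (iv ` S)"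
proof -
  assume a: "X \<in> Ob" "Y \<in> Ob" "homs X Y S"
  have h: "homs Y X (iv ` S)" using a by (auto simp: homs_def)
  show ?thesis
  proof (rule LE_antisym)
    have "LE (J X Y S) (iv (J Y X (iv ` S)))"
      apply (rule J_least) using a h apply auto
      apply (subst LE_iv_iff[symmetric]) apply (auto simp: homs_def)
      apply (rule J_upper) using a by (auto simp: homs_def)
    then show "LE (iv (J X Y S)) (J Y X (iv ` S))"
      using LE_iv a h by fastforce
    show "LE (J Y X (iv ` S)) (iv (J X Y S))"
      apply (rule J_least) using a h apply (auto simp: homs_def)
      apply (rule LE_iv) apply (rule J_upper) using a by (auto simp: homs_def)
  qed
qed

lemma J_single': "arr f \<Longrightarrow> dm f = X \<Longrightarrow> cd f = Y \<Longrightarrow> J X Y {f} = f"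
  using J_single by auto

lemma qle_LE: "arr f \<Longrightarrow> arr g \<Longrightarrow> dm f = dm g \<Longrightarrow> cd f = cd g \<Longrightarrow> qle Q f g \<longleftrightarrow> LE f g"
  by (simp add: LE_def)

lemma JI_upper: "i \<in> I \<Longrightarrow> X \<in> Ob \<Longrightarrow> Y \<in> Ob \<Longrightarrow>
   (\<And>i. i \<in> I \<Longrightarrow> arr (f i) \<and> dm (f i) = X \<and> cd (f i) = Y) \<Longrightarrow> LE (f i) (J X Y (f ` I))"
  by (rule J_upper) auto

lemma JI_ge: assumes "i \<in> I" "LE u (f i)" "X \<in> Ob" "Y \<in> Ob"
   "\<And>i. i \<in> I \<Longrightarrow> arr (f i) \<and> dm (f i) = X \<and> cd (f i) = Y" shows "LE u (J X Y (f ` I))"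
proof -
  have "LE (f i) (J X Y (f ` I))" by (rule JI_upper) (use assms in auto)
  then show ?thesis by (rule LE_trans[OF assms(2)])
qed

lemma JI_least: "X \<in> Ob \<Longrightarrow> Y \<in> Ob \<Longrightarrow>
   (\<And>i. i \<in> I \<Longrightarrow> arr (f i) \<and> dm (f i) = X \<and> cd (f i) = Y) \<Longrightarrow>
   arr u \<Longrightarrow> dm u = X \<Longrightarrow> cd u = Y \<Longrightarrow> (\<And>i. i \<in> I \<Longrightarrow> LE (f i) u) \<Longrightarrow>
   LE (J X Y (f ` I)) u"
  by (rule J_least) auto

lemma JI_mono: "X \<in> Ob \<Longrightarrow> Y \<in> Ob \<Longrightarrow>
   (\<And>i. i \<in> I \<Longrightarrow> arr (f i) \<and> dm (f i) = X \<and> cd (f i) = Y) \<Longrightarrow>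
   (\<And>i. i \<in> I \<Longrightarrow> arr (g i) \<and> dm (g i) = X \<and> cd (g i) = Y) \<Longrightarrow>
   (\<And>i. i \<in> I \<Longrightarrow> LE (f i) (g i)) \<Longrightarrow> LE (J X Y (f ` I)) (J X Y (g ` I))"
  apply (rule JI_least, auto)
  apply (rule JI_ge, auto)
  done

lemma cp_JI_r: "arr g \<Longrightarrow> X \<in> Ob \<Longrightarrow> dm g = Y \<Longrightarrow> cd g = Z \<Longrightarrow>
   (\<And>i. i \<in> I \<Longrightarrow> arr (f i) \<and> dm (f i) = X \<and> cd (f i) = Y) \<Longrightarrow>
   cp g (J X Y (f ` I)) = J X Z ((\<lambda>i. cp g (f i)) ` I)"
  using cp_J_r[of g X "f ` I"] by (auto simp: image_image)

lemma cp_JI_l: "arr g \<Longrightarrow> Z \<in> Ob \<Longrightarrow> cd g = Y \<Longrightarrow> dm g = W \<Longrightarrow>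
   (\<And>i. i \<in> I \<Longrightarrow> arr (f i) \<and> dm (f i) = Y \<and> cd (f i) = Z) \<Longrightarrow>
   cp (J Y Z (f ` I)) g = J W Z ((\<lambda>i. cp (f i) g) ` I)"
  using cp_J_l[of g Z "f ` I"] by (auto simp: image_image)

lemma JI_cong: "(\<And>i. i \<in> I \<Longrightarrow> f i = g i) \<Longrightarrow> J X Y (f ` I) = J X Y (g ` I)"
  by (metis image_cong)

lemma LE_one_r: "LE (one X) a \<Longrightarrow> arr f \<Longrightarrow> dm f = X \<Longrightarrow> LE f (cp f a)"
  using LE_cp_l[of "one X" a f] LE_arr[of "one X" a] by auto

lemma LE_one_l: "LE (one X) a \<Longrightarrow> arr f \<Longrightarrow> cd f = X \<Longrightarrow> LE f (cp a f)"
  using LE_cp_r[of "one X" a f] LE_arr[of "one X" a] by auto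

lemma meet_props: assumes "arr a" "arr b" "dm a = X" "dm b = X" "cd a = Y" "cd b = Y"
  shows "arr (qmeet Q X Y a b)" "dm (qmeet Q X Y a b) = X" "cd (qmeet Q X Y a b) = Y"
    "LE (qmeet Q X Y a b) a" "LE (qmeet Q X Y a b) b"
    "LE c a \<Longrightarrow> LE c b \<Longrightarrow> LE c (qmeet Q X Y a b)"
proof -
  let ?S = "{c \<in> qhom Q X Y. qle Q c a \<and> qle Q c b}"
  have X: "X \<in> Ob" "Y \<in> Ob" using assms by auto
  have h: "homs X Y ?S" by (auto simp: homs_def qhom_iff)
  show "arr (qmeet Q X Y a b)" "dm (qmeet Q X Y a b) = X" "cd (qmeet Q X Y a b) = Y"
    unfolding qmeet_def using J_arr[OF X h] by auto
  show "LE (qmeet Q X Y a b) a" unfolding qmeet_def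
    by (rule J_least[OF X h]) (use assms in \<open>auto simp: qhom_iff LE_def\<close>)
  show "LE (qmeet Q X Y a b) b" unfolding qmeet_def
    by (rule J_least[OF X h]) (use assms in \<open>auto simp: qhom_iff LE_def\<close>)
  show "LE c a \<Longrightarrow> LE c b \<Longrightarrow> LE c (qmeet Q X Y a b)" unfolding qmeet_def
    by (rule J_upper[OF X h]) (use assms in \<open>auto simp: qhom_iff LE_def\<close>)
qed

end

context IQ begin

definition ctyped :: "('a,'o,'m) qcat \<Rightarrow> bool" where
 "ctyped A \<longleftrightarrow> (\<forall>x\<in>cobj A. ctype A x \<in> Ob) \<and> (\<forall>x\<in>cobj A. \<forall>y\<in>cobj A.
     arr (chom A y x) \<and> dm (chom A y x) = ctype A x \<and> cd (chom A y x) = ctype A y)"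

lemma qle_refl[simp]: "arr f \<Longrightarrow> qle Q f f"
  using LE_refl[of f] by (simp add: LE_def)

lemma ct[simp]: "ctyped A \<Longrightarrow> x \<in> cobj A \<Longrightarrow> ctype A x \<in> Ob"
  "ctyped A \<Longrightarrow> x \<in> cobj A \<Longrightarrow> y \<in> cobj A \<Longrightarrow> arr (chom A y x)"
  "ctyped A \<Longrightarrow> x \<in> cobj A \<Longrightarrow> y \<in> cobj A \<Longrightarrow> dm (chom A y x) = ctype A x"
  "ctyped A \<Longrightarrow> x \<in> cobj A \<Longrightarrow> y \<in> cobj A \<Longrightarrow> cd (chom A y x) = ctype A y"
  by (auto simp: ctyped_def)

lemma qcat_ctyped: "qcat Q A \<Longrightarrow> ctyped A"
  unfolding qcat_def ctyped_def qhom_iff by (elim conjE) (intro conjI; assumption)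

lemma qcat_comp: "qcat Q A \<Longrightarrow> x \<in> cobj A \<Longrightarrow> y \<in> cobj A \<Longrightarrow> z \<in> cobj A \<Longrightarrow>
   LE (cp (chom A z y) (chom A y x)) (chom A z x)"
proof -
  assume a: "qcat Q A" "x \<in> cobj A" "y \<in> cobj A" "z \<in> cobj A"
  have "qle Q (cp (chom A z y) (chom A y x)) (chom A z x)"
    using a(1) unfolding qcat_def using a(2-4) by blast
  then show ?thesis using qcat_ctyped[OF a(1)] a(2-4) by (simp add: LE_def)
qed

lemma qcat_id: "qcat Q A \<Longrightarrow> x \<in> cobj A \<Longrightarrow> LE (one (ctype A x)) (chom A x x)"
proof -
  assume a: "qcat Q A" "x \<in> cobj A"
  have "qle Q (one (ctype A x)) (chom A x x)"
    using a(1) unfolding qcat_def using a(2) by blast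
  then show ?thesis using qcat_ctyped[OF a(1)] a(2) by (simp add: LE_def)
qed

lemma symz_simps[simp]: "cobj (symz Q A) = cobj A" "ctype (symz Q A) = ctype A"
  "chom (symz Q A) y x = qmeet Q (ctype A x) (ctype A y) (chom A y x) (iv (chom A x y))"
  by (auto simp: symz_def)

lemma symz_meet: assumes "ctyped A" "x \<in> cobj A" "y \<in> cobj A"
  shows "arr (chom (symz Q A) y x)" "dm (chom (symz Q A) y x) = ctype A x"
    "cd (chom (symz Q A) y x) = ctype A y"
    "LE (chom (symz Q A) y x) (chom A y x)" "LE (chom (symz Q A) y x) (iv (chom A x y))"
    "LE c (chom A y x) \<Longrightarrow> LE c (iv (chom A x y)) \<Longrightarrow> LE c (chom (symz Q A) y x)"
  using meet_props[of "chom A y x" "iv (chom A x y)" "ctype A x" "ctype A y"]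
    meet_props(6)[of "chom A y x" "iv (chom A x y)" "ctype A x" "ctype A y" c] assms by auto

lemma symz_ctyped: "ctyped A \<Longrightarrow> ctyped (symz Q A)"
  unfolding ctyped_def[of "symz Q A"] using symz_meet(1-3)[of A] by simp

lemma symz_id: "qcat Q A \<Longrightarrow> x \<in> cobj A \<Longrightarrow> LE (one (ctype A x)) (chom (symz Q A) x x)"
proof -
  assume a: "qcat Q A" "x \<in> cobj A"
  note c = qcat_ctyped[OF a(1)]
  have 1: "LE (one (ctype A x)) (chom A x x)" by (rule qcat_id[OF a])
  have "LE (iv (one (ctype A x))) (iv (chom A x x))" by (rule LE_iv[OF 1])
  then have 2: "LE (one (ctype A x)) (iv (chom A x x))" using c a by simp
  show ?thesis by (rule symz_meet(6)[OF c a(2) a(2) 1 2])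
qed

definition ladj :: "('a,'o,'m) qcat \<Rightarrow> 'o \<Rightarrow> ('a \<Rightarrow> 'm) \<Rightarrow> ('a \<Rightarrow> 'm) \<Rightarrow> bool" where
 "ladj A X \<phi> \<rho> \<longleftrightarrow> X \<in> Ob
   \<and> (\<forall>y\<in>cobj A. arr (\<phi> y) \<and> dm (\<phi> y) = X \<and> cd (\<phi> y) = ctype A y)
   \<and> (\<forall>y\<in>cobj A. \<forall>y'\<in>cobj A. LE (cp (chom A y' y) (\<phi> y)) (\<phi> y'))
   \<and> (\<forall>y\<in>cobj A. arr (\<rho> y) \<and> dm (\<rho> y) = ctype A y \<and> cd (\<rho> y) = X)
   \<and> (\<forall>x\<in>cobj A. \<forall>x'\<in>cobj A. LE (cp (\<rho> x) (chom A x x')) (\<rho> x'))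
   \<and> LE (one X) (J X X ((\<lambda>y. cp (\<rho> y) (\<phi> y)) ` cobj A))
   \<and> (\<forall>y\<in>cobj A. \<forall>y'\<in>cobj A. LE (cp (\<phi> y') (\<rho> y)) (chom A y' y))"

lemma L0: assumes "ctyped A" "X \<in> Ob"
  shows "left_adjoint_to Q (unit_cat Q X) A (as_dist \<phi>) \<Psi> \<longleftrightarrow> ladj A X \<phi> (\<Psi> ())"
  unfolding left_adjoint_to_def distributor_def dcomp_def ladj_def
  apply (simp add: unit_cat_def as_dist_def)
  apply (cases "(\<forall>y\<in>cobj A. arr (\<phi> y) \<and> dm (\<phi> y) = X \<and> cd (\<phi> y) = ctype A y) \<and>
     (\<forall>y\<in>cobj A. arr (\<Psi> () y) \<and> dm (\<Psi> () y) = ctype A y \<and> cd (\<Psi> () y) = X)")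
   apply (elim conjE)
   apply (simp add: qhom_iff LE_def J_single' assms)
  apply (auto simp: qhom_iff)
  done

end

context IQ begin

lemma cauchy_simps[simp]: "ctype (cauchy Q A) = fst" "chom (cauchy Q A) = cc_hom Q A"
  "p \<in> cobj (cauchy Q A) \<longleftrightarrow> fst p \<in> Ob \<and> extensional_on (cobj A) (snd p) \<and> left_adj_presheaf Q A (fst p) (snd p)"
  by (auto simp: cauchy_def)

lemma symcomp_simps[simp]: "ctype (symcomp Q A) = fst" "chom (symcomp Q A) = cc_hom Q A"
  "p \<in> cobj (symcomp Q A) \<longleftrightarrow> p \<in> cobj (cauchy Q A) \<and> sym_left_adj_presheaf Q A (fst p) (snd p)"
  by (auto simp: symcomp_def)

lemma lap_iff: "ctyped A \<Longrightarrow> X \<in> Ob \<Longrightarrow> left_adj_presheaf Q A X \<phi> \<longleftrightarrow> (\<exists>\<rho>. ladj A X \<phi> \<rho>)"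
proof -
  assume a: "ctyped A" "X \<in> Ob"
  show ?thesis unfolding left_adj_presheaf_def
  proof
    assume "\<exists>\<Psi>. left_adjoint_to Q (unit_cat Q X) A (as_dist \<phi>) \<Psi>"
    then obtain \<Psi> where "left_adjoint_to Q (unit_cat Q X) A (as_dist \<phi>) \<Psi>" by blast
    then show "\<exists>\<rho>. ladj A X \<phi> \<rho>" using L0[OF a] by blast
  next
    assume "\<exists>\<rho>. ladj A X \<phi> \<rho>"
    then obtain \<rho> where "ladj A X \<phi> \<rho>" by blast
    then have "left_adjoint_to Q (unit_cat Q X) A (as_dist \<phi>) (\<lambda>_. \<rho>)" using L0[OF a] by simp
    then show "\<exists>\<Psi>. left_adjoint_to Q (unit_cat Q X) A (as_dist \<phi>) \<Psi>" by blast
  qed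
qed

lemma RA_ladj: "ctyped A \<Longrightarrow> X \<in> Ob \<Longrightarrow> left_adj_presheaf Q A X \<phi> \<Longrightarrow> ladj A X \<phi> (right_adj Q A X \<phi> ())"
  unfolding left_adj_presheaf_def right_adj_def
  by (metis (mono_tags, lifting) L0 someI_ex)

lemma slap_ladj: "ctyped A \<Longrightarrow> X \<in> Ob \<Longrightarrow> sym_left_adj_presheaf Q A X \<phi> \<Longrightarrow> ladj A X \<phi> (\<lambda>y. iv (\<phi> y))"
  unfolding sym_left_adj_presheaf_def using L0[of A X \<phi> "dual_dist Q (as_dist \<phi>)"]
  by (simp add: dual_dist_def as_dist_def)

lemma ladjD: assumes "ladj A X \<phi> \<rho>"
  shows "X \<in> Ob"
   "\<And>y. y\<in>cobj A \<Longrightarrow> arr (\<phi> y)" "\<And>y. y\<in>cobj A \<Longrightarrow> dm (\<phi> y) = X"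
   "\<And>y. y\<in>cobj A \<Longrightarrow> cd (\<phi> y) = ctype A y"
   "\<And>y y'. y\<in>cobj A \<Longrightarrow> y'\<in>cobj A \<Longrightarrow> LE (cp (chom A y' y) (\<phi> y)) (\<phi> y')"
   "\<And>y. y\<in>cobj A \<Longrightarrow> arr (\<rho> y)" "\<And>y. y\<in>cobj A \<Longrightarrow> dm (\<rho> y) = ctype A y"
   "\<And>y. y\<in>cobj A \<Longrightarrow> cd (\<rho> y) = X"
   "\<And>x x'. x\<in>cobj A \<Longrightarrow> x'\<in>cobj A \<Longrightarrow> LE (cp (\<rho> x) (chom A x x')) (\<rho> x')"
   "LE (one X) (J X X ((\<lambda>y. cp (\<rho> y) (\<phi> y)) ` cobj A))"
   "\<And>y y'. y\<in>cobj A \<Longrightarrow> y'\<in>cobj A \<Longrightarrow> LE (cp (\<phi> y') (\<rho> y)) (chom A y' y)"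
  using assms unfolding ladj_def by auto

lemma ladj_unique1: assumes c: "ctyped A" and l1: "ladj A X \<phi> \<rho>1" and l2: "ladj A X \<phi> \<rho>2"
  and a: "a \<in> cobj A" shows "LE (\<rho>2 a) (\<rho>1 a)"
proof -
  note L1 = ladjD[OF l1] and L2 = ladjD[OF l2]
  have "\<rho>2 a = cp (one X) (\<rho>2 a)" using L2 a by simp
  also have "LE \<dots> (cp (J X X ((\<lambda>y. cp (\<rho>1 y) (\<phi> y)) ` cobj A)) (\<rho>2 a))"
    by (rule LE_cp_r[OF L1(10)]) (use L2 a in auto)
  also have "\<dots> = J (ctype A a) X ((\<lambda>y. cp (cp (\<rho>1 y) (\<phi> y)) (\<rho>2 a)) ` cobj A)"
    by (rule cp_JI_l) (use L1 L2 a in auto)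
  also have "LE \<dots> (\<rho>1 a)"
  proof (rule JI_least)
    fix y assume y: "y \<in> cobj A"
    have "cp (cp (\<rho>1 y) (\<phi> y)) (\<rho>2 a) = cp (\<rho>1 y) (cp (\<phi> y) (\<rho>2 a))"
      using L1 L2 a y c by (simp add: assoc)
    also have "LE \<dots> (cp (\<rho>1 y) (chom A y a))"
      by (rule LE_cp_l[OF L2(11)]) (use L1 L2 a y c in auto)
    also have "LE \<dots> (\<rho>1 a)" using L1(9) a y by auto
    finally show "LE (cp (cp (\<rho>1 y) (\<phi> y)) (\<rho>2 a)) (\<rho>1 a)" .
  qed (use L1 L2 a c in auto)
  finally show ?thesis .
qed

lemma ladj_unique: "ctyped A \<Longrightarrow> ladj A X \<phi> \<rho>1 \<Longrightarrow> ladj A X \<phi> \<rho>2 \<Longrightarrow> a \<in> cobj A \<Longrightarrow> \<rho>1 a = \<rho>2 a"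
  by (meson LE_antisym ladj_unique1)

lemma cc_hom_eq: assumes "ctyped A" "fst p \<in> Ob" "left_adj_presheaf Q A (fst p) (snd p)"
  "ladj A (fst p) (snd p) \<rho>"
  shows "cc_hom Q A p q = J (fst q) (fst p) ((\<lambda>y. cp (\<rho> y) (snd q y)) ` cobj A)"
proof -
  have "\<And>y. y \<in> cobj A \<Longrightarrow> right_adj Q A (fst p) (snd p) () y = \<rho> y"
    using ladj_unique[OF assms(1) RA_ladj[OF assms(1-3)] assms(4)] by blast
  then show ?thesis
    unfolding cc_hom_def dcomp_def unit_cat_def as_dist_def by (auto intro!: JI_cong)
qed

lemma cp_JJ_le: assumes "X \<in> Ob" "Y \<in> Ob" "Z \<in> Ob"
  "\<And>i. i \<in> I \<Longrightarrow> arr (f i) \<and> dm (f i) = Y \<and> cd (f i) = Z"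
  "\<And>k. k \<in> K \<Longrightarrow> arr (g k) \<and> dm (g k) = X \<and> cd (g k) = Y"
  "arr u" "dm u = X" "cd u = Z"
  "\<And>i k. i \<in> I \<Longrightarrow> k \<in> K \<Longrightarrow> LE (cp (f i) (g k)) u"
  shows "LE (cp (J Y Z (f ` I)) (J X Y (g ` K))) u"
proof -
  have "cp (J Y Z (f ` I)) (J X Y (g ` K)) = J X Z ((\<lambda>i. cp (f i) (J X Y (g ` K))) ` I)"
    by (rule cp_JI_l) (use assms in auto)
  also have "LE \<dots> u"
  proof (rule JI_least)
    fix i assume i: "i \<in> I"
    have "cp (f i) (J X Y (g ` K)) = J X Z ((\<lambda>k. cp (f i) (g k)) ` K)"
      by (rule cp_JI_r) (use assms i in auto)
    also have "LE \<dots> u"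
      by (rule JI_least) (use assms i in auto)
    finally show "LE (cp (f i) (J X Y (g ` K))) u" .
  qed (use assms in auto)
  finally show ?thesis .
qed

end

context IQ begin

definition Lf :: "('a,'o,'m) qcat \<Rightarrow> 'o \<Rightarrow> ('a \<Rightarrow> 'm) \<Rightarrow> 'a \<Rightarrow> 'm" where
 "Lf A X \<phi> = (\<lambda>b. if b \<in> cobj A then J X (ctype A b) ((\<lambda>y. cp (chom A b y) (\<phi> y)) ` cobj A) else undefined)"
definition Lr :: "('a,'o,'m) qcat \<Rightarrow> 'o \<Rightarrow> ('a \<Rightarrow> 'm) \<Rightarrow> 'a \<Rightarrow> 'm" where
 "Lr A X \<phi> = (\<lambda>b. J (ctype A b) X ((\<lambda>y. cp (iv (\<phi> y)) (chom A y b)) ` cobj A))"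

lemma pres_comp_eq: "pres_comp Q A B \<Phi> p = (fst p, (\<lambda>b. if b \<in> cobj B
       then J (fst p) (ctype B b) ((\<lambda>y. cp (\<Phi> b y) (snd p y)) ` cobj A) else undefined))"
  unfolding pres_comp_def dcomp_def unit_cat_def as_dist_def by (simp cong: if_cong)

lemma Lmap_eq: "Lmap Q A p = (fst p, Lf A (fst p) (snd p))"
  unfolding Lmap_def pres_comp_eq Lf_def by (simp cong: if_cong)

lemma symz_ladj_facts: assumes "ladj (symz Q A) X \<phi> \<rho>"
  shows "X \<in> Ob" "\<And>y. y \<in> cobj A \<Longrightarrow> arr (\<phi> y)" "\<And>y. y \<in> cobj A \<Longrightarrow> dm (\<phi> y) = X"
    "\<And>y. y \<in> cobj A \<Longrightarrow> cd (\<phi> y) = ctype A y"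
  using ladjD[OF assms] by auto

lemma Lf_facts: assumes q: "qcat Q A" and S: "ladj (symz Q A) X \<phi> \<rho>" and b: "b \<in> cobj A"
  shows "Lf A X \<phi> b = J X (ctype A b) ((\<lambda>y. cp (chom A b y) (\<phi> y)) ` cobj A)"
    "arr (Lf A X \<phi> b)" "dm (Lf A X \<phi> b) = X" "cd (Lf A X \<phi> b) = ctype A b"
  using symz_ladj_facts[OF S] qcat_ctyped[OF q] b by (auto simp: Lf_def)

lemma Lr_facts: assumes q: "qcat Q A" and S: "ladj (symz Q A) X \<phi> \<rho>" and b: "b \<in> cobj A"
  shows "arr (Lr A X \<phi> b)" "dm (Lr A X \<phi> b) = ctype A b" "cd (Lr A X \<phi> b) = X"
  using symz_ladj_facts[OF S] qcat_ctyped[OF q] b by (auto simp: Lr_def)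

lemma phi_le_Lf: assumes q: "qcat Q A" and S: "ladj (symz Q A) X \<phi> \<rho>" and y: "y \<in> cobj A"
  shows "LE (\<phi> y) (Lf A X \<phi> y)"
proof -
  note c = qcat_ctyped[OF q] and F = symz_ladj_facts[OF S]
  have "LE (\<phi> y) (cp (chom A y y) (\<phi> y))"
    by (rule LE_one_l[OF qcat_id[OF q y]]) (use F y in auto)
  also have "LE \<dots> (Lf A X \<phi> y)" unfolding Lf_facts(1)[OF q S y]
    by (rule JI_upper[of y "cobj A" X "ctype A y" "\<lambda>y'. cp (chom A y y') (\<phi> y')", simplified])
      (use F y c in auto)
  finally show ?thesis .
qed

lemma ivphi_le_Lr: assumes q: "qcat Q A" and S: "ladj (symz Q A) X \<phi> \<rho>" and y: "y \<in> cobj A"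
  shows "LE (iv (\<phi> y)) (Lr A X \<phi> y)"
proof -
  note c = qcat_ctyped[OF q] and F = symz_ladj_facts[OF S]
  have "LE (iv (\<phi> y)) (cp (iv (\<phi> y)) (chom A y y))"
    by (rule LE_one_r[OF qcat_id[OF q y]]) (use F y in auto)
  also have "LE \<dots> (Lr A X \<phi> y)" unfolding Lr_def
    by (rule JI_upper[of y "cobj A" "ctype A y" X "\<lambda>y'. cp (iv (\<phi> y')) (chom A y' y)", simplified])
      (use F y c in auto)
  finally show ?thesis .
qed

lemma L_ladj: assumes q: "qcat Q A" and S: "ladj (symz Q A) X \<phi> (\<lambda>y. iv (\<phi> y))"
  shows "ladj A X (Lf A X \<phi>) (Lr A X \<phi>)"
proof -
  note c = qcat_ctyped[OF q] and F = symz_ladj_facts[OF S] and T = ladjD[OF S]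
  note LfF = Lf_facts[OF q S] and LrF = Lr_facts[OF q S]
  have phiA: "LE (cp (\<phi> y') (iv (\<phi> y))) (chom A y' y)" if "y \<in> cobj A" "y' \<in> cobj A" for y y'
    using LE_trans[OF T(11)[of y y'] symz_meet(4)[OF c, of y y']] that by simp
  have i1: "\<forall>y\<in>cobj A. \<forall>y'\<in>cobj A. LE (cp (chom A y' y) (Lf A X \<phi> y)) (Lf A X \<phi> y')"
  proof (intro ballI)
    fix b b' assume b: "b \<in> cobj A" and b': "b' \<in> cobj A"
    have "cp (chom A b' b) (Lf A X \<phi> b) = J X (ctype A b') ((\<lambda>y. cp (chom A b' b) (cp (chom A b y) (\<phi> y))) ` cobj A)"
      unfolding LfF(1)[OF b] by (rule cp_JI_r) (use F c b b' in auto)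
    also have "LE \<dots> (Lf A X \<phi> b')" unfolding LfF(1)[OF b']
    proof (rule JI_mono)
      fix y assume y: "y \<in> cobj A"
      have "cp (chom A b' b) (cp (chom A b y) (\<phi> y)) = cp (cp (chom A b' b) (chom A b y)) (\<phi> y)"
        using F c b b' y by (simp add: assoc)
      also have "LE \<dots> (cp (chom A b' y) (\<phi> y))"
        by (rule LE_cp_r[OF qcat_comp[OF q y b b']]) (use F c b b' y in auto)
      finally show "LE (cp (chom A b' b) (cp (chom A b y) (\<phi> y))) (cp (chom A b' y) (\<phi> y))" .
    qed (use F c b b' in auto)
    finally show "LE (cp (chom A b' b) (Lf A X \<phi> b)) (Lf A X \<phi> b')" .
  qed
  have i2: "\<forall>x\<in>cobj A. \<forall>x'\<in>cobj A. LE (cp (Lr A X \<phi> x) (chom A x x')) (Lr A X \<phi> x')"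
  proof (intro ballI)
    fix b b' assume b: "b \<in> cobj A" and b': "b' \<in> cobj A"
    have "cp (Lr A X \<phi> b) (chom A b b') = J (ctype A b') X ((\<lambda>y. cp (cp (iv (\<phi> y)) (chom A y b)) (chom A b b')) ` cobj A)"
      unfolding Lr_def by (rule cp_JI_l) (use F c b b' in auto)
    also have "LE \<dots> (Lr A X \<phi> b')" unfolding Lr_def
    proof (rule JI_mono)
      fix y assume y: "y \<in> cobj A"
      have "cp (cp (iv (\<phi> y)) (chom A y b)) (chom A b b') = cp (iv (\<phi> y)) (cp (chom A y b) (chom A b b'))"
        using F c b b' y by (simp add: assoc)
      also have "LE \<dots> (cp (iv (\<phi> y)) (chom A y b'))"
        by (rule LE_cp_l[OF qcat_comp[OF q b' b y]]) (use F c b b' y in auto)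
      finally show "LE (cp (cp (iv (\<phi> y)) (chom A y b)) (chom A b b')) (cp (iv (\<phi> y)) (chom A y b'))" .
    qed (use F c b b' in auto)
    finally show "LE (cp (Lr A X \<phi> b) (chom A b b')) (Lr A X \<phi> b')" .
  qed
  have i3: "LE (one X) (J X X ((\<lambda>y. cp (Lr A X \<phi> y) (Lf A X \<phi> y)) ` cobj A))"
  proof -
    have "LE (one X) (J X X ((\<lambda>y. cp (iv (\<phi> y)) (\<phi> y)) ` cobj A))" using T(10) by simp
    also have "LE \<dots> (J X X ((\<lambda>y. cp (Lr A X \<phi> y) (Lf A X \<phi> y)) ` cobj A))"
    proof (rule JI_mono)
      fix y assume y: "y \<in> cobj A"
      show "LE (cp (iv (\<phi> y)) (\<phi> y)) (cp (Lr A X \<phi> y) (Lf A X \<phi> y))"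
        by (rule LE_cp[OF phi_le_Lf[OF q S y] ivphi_le_Lr[OF q S y]]) (use F y in auto)
    qed (use F c LfF LrF in auto)
    finally show ?thesis .
  qed
  have i4: "\<forall>y\<in>cobj A. \<forall>y'\<in>cobj A. LE (cp (Lf A X \<phi> y') (Lr A X \<phi> y)) (chom A y' y)"
  proof (intro ballI)
    fix b b' assume b: "b \<in> cobj A" and b': "b' \<in> cobj A"
    show "LE (cp (Lf A X \<phi> b') (Lr A X \<phi> b)) (chom A b' b)"
      unfolding LfF(1)[OF b'] Lr_def
    proof (rule cp_JJ_le)
      fix y z assume y: "y \<in> cobj A" and z: "z \<in> cobj A"
      have "cp (cp (chom A b' y) (\<phi> y)) (cp (iv (\<phi> z)) (chom A z b))
           = cp (chom A b' y) (cp (cp (\<phi> y) (iv (\<phi> z))) (chom A z b))"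
        using F c b b' y z by (simp add: assoc)
      also have "LE \<dots> (cp (chom A b' y) (cp (chom A y z) (chom A z b)))"
        by (rule LE_cp_l[OF LE_cp_r[OF phiA[OF z y]]]) (use F c b b' y z in auto)
      also have "LE \<dots> (cp (chom A b' y) (chom A y b))"
        by (rule LE_cp_l[OF qcat_comp[OF q b z y]]) (use F c b b' y z in auto)
      also have "LE \<dots> (chom A b' b)" by (rule qcat_comp[OF q b y b'])
      finally show "LE (cp (cp (chom A b' y) (\<phi> y)) (cp (iv (\<phi> z)) (chom A z b))) (chom A b' b)" .
    qed (use F c b b' in auto)
  qed
  show ?thesis unfolding ladj_def using i1 i2 i3 i4 F LfF LrF by auto
qed

lemma K1: assumes q: "qcat Q A" and S: "ladj (symz Q A) X \<phi> (\<lambda>y. iv (\<phi> y))"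
  and z: "z \<in> cobj A" and b: "b \<in> cobj A"
  shows "LE (cp (\<phi> z) (Lr A X \<phi> b)) (chom A z b)"
proof -
  note c = qcat_ctyped[OF q] and F = symz_ladj_facts[OF S] and T = ladjD[OF S]
  have "cp (\<phi> z) (Lr A X \<phi> b) = J (ctype A b) (ctype A z) ((\<lambda>y. cp (\<phi> z) (cp (iv (\<phi> y)) (chom A y b))) ` cobj A)"
    unfolding Lr_def by (rule cp_JI_r) (use F c b z in auto)
  also have "LE \<dots> (chom A z b)"
  proof (rule JI_least)
    fix y assume y: "y \<in> cobj A"
    have "cp (\<phi> z) (cp (iv (\<phi> y)) (chom A y b)) = cp (cp (\<phi> z) (iv (\<phi> y))) (chom A y b)"
      using F c b z y by (simp add: assoc)
    also have "LE \<dots> (cp (chom A z y) (chom A y b))"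
      by (rule LE_cp_r[OF LE_trans[OF T(11)[of y z] symz_meet(4)[OF c, of y z]]]) (use F c b z y in auto)
    also have "LE \<dots> (chom A z b)" by (rule qcat_comp[OF q b y z])
    finally show "LE (cp (\<phi> z) (cp (iv (\<phi> y)) (chom A y b))) (chom A z b)" .
  qed (use F c b z in auto)
  finally show ?thesis .
qed

lemma K2: assumes q: "qcat Q A" and S: "ladj (symz Q A) X \<phi> (\<lambda>y. iv (\<phi> y))"
  and y: "y \<in> cobj A" and b: "b \<in> cobj A"
  shows "LE (cp (Lf A X \<phi> b) (iv (\<phi> y))) (chom A b y)"
proof -
  note c = qcat_ctyped[OF q] and F = symz_ladj_facts[OF S] and T = ladjD[OF S]
  have "cp (Lf A X \<phi> b) (iv (\<phi> y)) = J (ctype A y) (ctype A b) ((\<lambda>y'. cp (cp (chom A b y') (\<phi> y')) (iv (\<phi> y))) ` cobj A)"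
    unfolding Lf_facts(1)[OF q S b] by (rule cp_JI_l) (use F c b y in auto)
  also have "LE \<dots> (chom A b y)"
  proof (rule JI_least)
    fix y' assume y': "y' \<in> cobj A"
    have "cp (cp (chom A b y') (\<phi> y')) (iv (\<phi> y)) = cp (chom A b y') (cp (\<phi> y') (iv (\<phi> y)))"
      using F c b y' y by (simp add: assoc)
    also have "LE \<dots> (cp (chom A b y') (chom A y' y))"
      by (rule LE_cp_l[OF LE_trans[OF T(11)[of y y'] symz_meet(4)[OF c, of y y']]]) (use F c b y y' in auto)
    also have "LE \<dots> (chom A b y)" by (rule qcat_comp[OF q y y' b])
    finally show "LE (cp (cp (chom A b y') (\<phi> y')) (iv (\<phi> y))) (chom A b y)" .
  qed (use F c b y in auto)
  finally show ?thesis .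
qed

definition Mh :: "('a,'o,'m) qcat \<Rightarrow> 'o \<Rightarrow> ('a \<Rightarrow> 'm) \<Rightarrow> 'o \<Rightarrow> ('a \<Rightarrow> 'm) \<Rightarrow> 'm" where
  "Mh A Xq \<psi> Xp \<phi> = J Xp Xq ((\<lambda>b. cp (Lr A Xq \<psi> b) (Lf A Xp \<phi> b)) ` cobj A)"
definition Rh :: "('a,'o,'m) qcat \<Rightarrow> 'o \<Rightarrow> ('a \<Rightarrow> 'm) \<Rightarrow> 'o \<Rightarrow> ('a \<Rightarrow> 'm) \<Rightarrow> 'm" where
  "Rh A Xq \<psi> Xp \<phi> = J Xp Xq ((\<lambda>y. cp (iv (\<psi> y)) (\<phi> y)) ` cobj A)"

lemma MR_typ: assumes q: "qcat Q A" and Sp: "ladj (symz Q A) Xp \<phi> (\<lambda>y. iv (\<phi> y))"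
  and Sq: "ladj (symz Q A) Xq \<psi> (\<lambda>y. iv (\<psi> y))"
  shows "arr (Mh A Xq \<psi> Xp \<phi>)" "dm (Mh A Xq \<psi> Xp \<phi>) = Xp" "cd (Mh A Xq \<psi> Xp \<phi>) = Xq"
    "arr (Rh A Xq \<psi> Xp \<phi>)" "dm (Rh A Xq \<psi> Xp \<phi>) = Xp" "cd (Rh A Xq \<psi> Xp \<phi>) = Xq"
  using symz_ladj_facts[OF Sp] symz_ladj_facts[OF Sq] Lf_facts[OF q Sp] Lr_facts[OF q Sq]
    qcat_ctyped[OF q] by (auto simp: Mh_def Rh_def)

lemma K: assumes q: "qcat Q A" and Sp: "ladj (symz Q A) Xp \<phi> (\<lambda>y. iv (\<phi> y))"
  and Sq: "ladj (symz Q A) Xq \<psi> (\<lambda>y. iv (\<psi> y))" and z: "z \<in> cobj A" and y: "y \<in> cobj A"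
  shows "LE (cp (cp (\<psi> z) (Mh A Xq \<psi> Xp \<phi>)) (iv (\<phi> y))) (chom A z y)"
proof -
  note c = qcat_ctyped[OF q] and Fp = symz_ladj_facts[OF Sp] and Fq = symz_ladj_facts[OF Sq]
  note LfF = Lf_facts[OF q Sp] and LrF = Lr_facts[OF q Sq]
  have "cp (\<psi> z) (Mh A Xq \<psi> Xp \<phi>) = J Xp (ctype A z) ((\<lambda>b. cp (\<psi> z) (cp (Lr A Xq \<psi> b) (Lf A Xp \<phi> b))) ` cobj A)"
    unfolding Mh_def by (rule cp_JI_r) (use Fp Fq c z LfF LrF in auto)
  then have "cp (cp (\<psi> z) (Mh A Xq \<psi> Xp \<phi>)) (iv (\<phi> y)) =
     cp (J Xp (ctype A z) ((\<lambda>b. cp (\<psi> z) (cp (Lr A Xq \<psi> b) (Lf A Xp \<phi> b))) ` cobj A)) (iv (\<phi> y))"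
    by simp
  also have "\<dots> = J (ctype A y) (ctype A z) ((\<lambda>b. cp (cp (\<psi> z) (cp (Lr A Xq \<psi> b) (Lf A Xp \<phi> b))) (iv (\<phi> y))) ` cobj A)"
    by (rule cp_JI_l) (use Fp Fq c z y LfF LrF in auto)
  also have "LE \<dots> (chom A z y)"
  proof (rule JI_least)
    fix b assume b: "b \<in> cobj A"
    have "cp (cp (\<psi> z) (cp (Lr A Xq \<psi> b) (Lf A Xp \<phi> b))) (iv (\<phi> y))
       = cp (cp (\<psi> z) (Lr A Xq \<psi> b)) (cp (Lf A Xp \<phi> b) (iv (\<phi> y)))"
      using Fp Fq c z y b LfF[OF b] LrF[OF b] by (simp add: assoc)
    also have "LE \<dots> (cp (chom A z b) (chom A b y))"
      by (rule LE_cp[OF K2[OF q Sp y b] K1[OF q Sq z b]]) (use Fp Fq c z y b LfF[OF b] LrF[OF b] in auto)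
    also have "LE \<dots> (chom A z y)" by (rule qcat_comp[OF q y b z])
    finally show "LE (cp (cp (\<psi> z) (cp (Lr A Xq \<psi> b) (Lf A Xp \<phi> b))) (iv (\<phi> y))) (chom A z y)" .
  qed (use Fp Fq c z y LfF(2-4) LrF in auto)
  finally show ?thesis .
qed

lemma R_le_M: assumes q: "qcat Q A" and Sp: "ladj (symz Q A) Xp \<phi> (\<lambda>y. iv (\<phi> y))"
  and Sq: "ladj (symz Q A) Xq \<psi> (\<lambda>y. iv (\<psi> y))"
  shows "LE (Rh A Xq \<psi> Xp \<phi>) (Mh A Xq \<psi> Xp \<phi>)"
  unfolding Rh_def Mh_def
proof (rule JI_mono)
  fix y assume y: "y \<in> cobj A"
  show "LE (cp (iv (\<psi> y)) (\<phi> y)) (cp (Lr A Xq \<psi> y) (Lf A Xp \<phi> y))"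
    by (rule LE_cp[OF phi_le_Lf[OF q Sp y] ivphi_le_Lr[OF q Sq y]])
      (use symz_ladj_facts[OF Sp] symz_ladj_facts[OF Sq] y in auto)
qed (use symz_ladj_facts[OF Sp] symz_ladj_facts[OF Sq] Lf_facts[OF q Sp] Lr_facts[OF q Sq]
    qcat_ctyped[OF q] in auto)

lemma R_sym: assumes q: "qcat Q A" and Sp: "ladj (symz Q A) Xp \<phi> (\<lambda>y. iv (\<phi> y))"
  and Sq: "ladj (symz Q A) Xq \<psi> (\<lambda>y. iv (\<psi> y))"
  shows "iv (Rh A Xp \<phi> Xq \<psi>) = Rh A Xq \<psi> Xp \<phi>"
proof -
  note Fp = symz_ladj_facts[OF Sp] and Fq = symz_ladj_facts[OF Sq]
  have "iv (Rh A Xp \<phi> Xq \<psi>) = J Xp Xq (iv ` ((\<lambda>y. cp (iv (\<phi> y)) (\<psi> y)) ` cobj A))"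
    unfolding Rh_def by (rule iv_J) (use Fp Fq in auto)
  also have "\<dots> = J Xp Xq ((\<lambda>y. iv (cp (iv (\<phi> y)) (\<psi> y))) ` cobj A)" by (simp add: image_image)
  also have "\<dots> = Rh A Xq \<psi> Xp \<phi>" unfolding Rh_def
    by (rule JI_cong) (use Fp Fq in \<open>simp add: iv_cp\<close>)
  finally show ?thesis .
qed

lemma FF: assumes q: "qcat Q A" and Sp: "ladj (symz Q A) Xp \<phi> (\<lambda>y. iv (\<phi> y))"
  and Sq: "ladj (symz Q A) Xq \<psi> (\<lambda>y. iv (\<psi> y))"
  shows "qmeet Q Xp Xq (Mh A Xq \<psi> Xp \<phi>) (iv (Mh A Xp \<phi> Xq \<psi>)) = Rh A Xq \<psi> Xp \<phi>"
proof -
  note c = qcat_ctyped[OF q] and Fp = symz_ladj_facts[OF Sp] and Fq = symz_ladj_facts[OF Sq]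
  note Tp = ladjD[OF Sp] and Tq = ladjD[OF Sq]
  note ty1 = MR_typ[OF q Sp Sq] and ty2 = MR_typ[OF q Sq Sp]
  let ?u = "qmeet Q Xp Xq (Mh A Xq \<psi> Xp \<phi>) (iv (Mh A Xp \<phi> Xq \<psi>))"
  note mp = meet_props[of "Mh A Xq \<psi> Xp \<phi>" "iv (Mh A Xp \<phi> Xq \<psi>)" Xp Xq]
  note mp6 = meet_props(6)[of "Mh A Xq \<psi> Xp \<phi>" "iv (Mh A Xp \<phi> Xq \<psi>)" Xp Xq]
  have u: "arr ?u" "dm ?u = Xp" "cd ?u = Xq" "LE ?u (Mh A Xq \<psi> Xp \<phi>)" "LE ?u (iv (Mh A Xp \<phi> Xq \<psi>))"
    using mp ty1 ty2 by auto
  have ge: "LE (Rh A Xq \<psi> Xp \<phi>) ?u"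
  proof (rule mp6)
    show "LE (Rh A Xq \<psi> Xp \<phi>) (Mh A Xq \<psi> Xp \<phi>)" by (rule R_le_M[OF q Sp Sq])
    have "LE (iv (Rh A Xp \<phi> Xq \<psi>)) (iv (Mh A Xp \<phi> Xq \<psi>))" by (rule LE_iv[OF R_le_M[OF q Sq Sp]])
    then show "LE (Rh A Xq \<psi> Xp \<phi>) (iv (Mh A Xp \<phi> Xq \<psi>))" using R_sym[OF q Sp Sq] by simp
  qed (use ty1 ty2 in auto)
  have key: "LE (cp (cp (\<psi> z) ?u) (iv (\<phi> y))) (chom (symz Q A) z y)" if z: "z \<in> cobj A" and y: "y \<in> cobj A" for z y
  proof (rule symz_meet(6)[OF c y z])
    have "LE (cp (cp (\<psi> z) ?u) (iv (\<phi> y))) (cp (cp (\<psi> z) (Mh A Xq \<psi> Xp \<phi>)) (iv (\<phi> y)))"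
      by (rule LE_cp_r[OF LE_cp_l[OF u(4)]]) (use u Fp Fq z y in auto)
    also have "LE \<dots> (chom A z y)" by (rule K[OF q Sp Sq z y])
    finally show "LE (cp (cp (\<psi> z) ?u) (iv (\<phi> y))) (chom A z y)" .
    have ivu: "LE (iv ?u) (Mh A Xp \<phi> Xq \<psi>)" using LE_iv[OF u(5)] ty2 by simp
    have "iv (cp (cp (\<psi> z) ?u) (iv (\<phi> y))) = cp (cp (\<phi> y) (iv ?u)) (iv (\<psi> z))"
      using u Fp Fq z y by (simp add: iv_cp assoc)
    also have "LE \<dots> (cp (cp (\<phi> y) (Mh A Xp \<phi> Xq \<psi>)) (iv (\<psi> z)))"
      by (rule LE_cp_r[OF LE_cp_l[OF ivu]]) (use u Fp Fq z y in auto)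
    also have "LE \<dots> (chom A y z)" by (rule K[OF q Sq Sp y z])
    finally have "LE (iv (cp (cp (\<psi> z) ?u) (iv (\<phi> y)))) (chom A y z)" .
    from LE_iv[OF this] show "LE (cp (cp (\<psi> z) ?u) (iv (\<phi> y))) (iv (chom A y z))"
      using u Fp Fq z y by simp
  qed
  have le: "LE ?u (Rh A Xq \<psi> Xp \<phi>)"
  proof -
    have "?u = cp (one Xq) (cp ?u (one Xp))" using u by simp
    also have "LE \<dots> (cp (J Xq Xq ((\<lambda>z. cp (iv (\<psi> z)) (\<psi> z)) ` cobj A))
                       (cp ?u (J Xp Xp ((\<lambda>y. cp (iv (\<phi> y)) (\<phi> y)) ` cobj A))))"
      by (rule LE_cp[OF LE_cp_l[OF Tp(10)[simplified]] Tq(10)[simplified]]) (use u Fp Fq in auto)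
    also have "cp ?u (J Xp Xp ((\<lambda>y. cp (iv (\<phi> y)) (\<phi> y)) ` cobj A))
        = J Xp Xq ((\<lambda>y. cp ?u (cp (iv (\<phi> y)) (\<phi> y))) ` cobj A)"
      by (rule cp_JI_r) (use u Fp in auto)
    also have "LE (cp (J Xq Xq ((\<lambda>z. cp (iv (\<psi> z)) (\<psi> z)) ` cobj A))
                  (J Xp Xq ((\<lambda>y. cp ?u (cp (iv (\<phi> y)) (\<phi> y))) ` cobj A))) (Rh A Xq \<psi> Xp \<phi>)"
    proof (rule cp_JJ_le)
      fix z y assume z: "z \<in> cobj A" and y: "y \<in> cobj A"
      have "cp (cp (iv (\<psi> z)) (\<psi> z)) (cp ?u (cp (iv (\<phi> y)) (\<phi> y)))
         = cp (iv (\<psi> z)) (cp (cp (cp (\<psi> z) ?u) (iv (\<phi> y))) (\<phi> y))"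
        using u Fp Fq z y by (simp add: assoc)
      also have "LE \<dots> (cp (iv (\<psi> z)) (cp (chom (symz Q A) z y) (\<phi> y)))"
        by (rule LE_cp_l[OF LE_cp_r[OF key[OF z y]]]) (use u Fp Fq z y in auto)
      also have "\<dots> = cp (cp (iv (\<psi> z)) (chom (symz Q A) z y)) (\<phi> y)"
        using u Fp Fq z y symz_meet(1-3)[OF c y z] by (simp add: assoc)
      also have "LE \<dots> (cp (iv (\<psi> y)) (\<phi> y))"
        by (rule LE_cp_r[OF Tq(9)]) (use u Fp Fq z y symz_meet(1-3)[OF c y z] in auto)
      also have "LE \<dots> (Rh A Xq \<psi> Xp \<phi>)" unfolding Rh_def
        by (rule JI_upper[of y "cobj A" Xp Xq "\<lambda>y. cp (iv (\<psi> y)) (\<phi> y)", simplified])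
          (use Fp Fq y in auto)
      finally show "LE (cp (cp (iv (\<psi> z)) (\<psi> z)) (cp ?u (cp (iv (\<phi> y)) (\<phi> y)))) (Rh A Xq \<psi> Xp \<phi>)" .
    qed (use u Fp Fq ty1 in auto)
    finally show ?thesis .
  qed
  show ?thesis by (rule LE_antisym[OF le ge])
qed

lemma Sep: assumes q: "qcat Q A" and Sp: "ladj (symz Q A) X \<phi> (\<lambda>y. iv (\<phi> y))"
  and Sq: "ladj (symz Q A) X \<psi> (\<lambda>y. iv (\<psi> y))" and one: "LE (one X) (Rh A X \<psi> X \<phi>)"
  and y: "y \<in> cobj A"
  shows "LE (\<psi> y) (\<phi> y)"
proof -
  note c = qcat_ctyped[OF q] and Fp = symz_ladj_facts[OF Sp] and Fq = symz_ladj_facts[OF Sq]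
  note Tp = ladjD[OF Sp] and Tq = ladjD[OF Sq]
  have "\<psi> y = cp (\<psi> y) (one X)" using Fq y by simp
  also have "LE \<dots> (cp (\<psi> y) (Rh A X \<psi> X \<phi>))"
    by (rule LE_cp_l[OF one]) (use Fq y in auto)
  also have "\<dots> = J X (ctype A y) ((\<lambda>y'. cp (\<psi> y) (cp (iv (\<psi> y')) (\<phi> y'))) ` cobj A)"
    unfolding Rh_def by (rule cp_JI_r) (use Fp Fq y in auto)
  also have "LE \<dots> (\<phi> y)"
  proof (rule JI_least)
    fix y' assume y': "y' \<in> cobj A"
    have "cp (\<psi> y) (cp (iv (\<psi> y')) (\<phi> y')) = cp (cp (\<psi> y) (iv (\<psi> y'))) (\<phi> y')"
      using Fp Fq y y' by (simp add: assoc)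
    also have "LE \<dots> (cp (chom (symz Q A) y y') (\<phi> y'))"
      by (rule LE_cp_r[OF Tq(11)]) (use Fp Fq y y' in auto)
    also have "LE \<dots> (\<phi> y)" using Tp(5)[of y' y] y y' by simp
    finally show "LE (cp (\<psi> y) (cp (iv (\<psi> y')) (\<phi> y'))) (\<phi> y)" .
  qed (use Fp Fq y c in auto)
  finally show ?thesis .
qed

lemma sc_obj: assumes q: "qcat Q A" and p: "p \<in> cobj (symcomp Q (symz Q A))"
  shows "ladj (symz Q A) (fst p) (snd p) (\<lambda>y. iv (snd p y))" "fst p \<in> Ob"
    "extensional_on (cobj A) (snd p)" "left_adj_presheaf Q (symz Q A) (fst p) (snd p)"
proof -
  have cs: "ctyped (symz Q A)" by (rule symz_ctyped[OF qcat_ctyped[OF q]])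
  show "fst p \<in> Ob" "extensional_on (cobj A) (snd p)" "left_adj_presheaf Q (symz Q A) (fst p) (snd p)"
    using p by auto
  show "ladj (symz Q A) (fst p) (snd p) (\<lambda>y. iv (snd p y))"
    by (rule slap_ladj[OF cs]) (use p in auto)
qed

lemma L_obj: assumes q: "qcat Q A" and p: "p \<in> cobj (symcomp Q (symz Q A))"
  shows "Lmap Q A p \<in> cobj (cauchy Q A)" "ladj A (fst p) (Lf A (fst p) (snd p)) (Lr A (fst p) (snd p))"
proof -
  note P = sc_obj[OF q p]
  show L: "ladj A (fst p) (Lf A (fst p) (snd p)) (Lr A (fst p) (snd p))" by (rule L_ladj[OF q P(1)])
  have "extensional_on (cobj A) (Lf A (fst p) (snd p))" by (simp add: Lf_def extensional_on_def)
  then show "Lmap Q A p \<in> cobj (cauchy Q A)"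
    using P(2) L lap_iff[OF qcat_ctyped[OF q] P(2)] by (auto simp: Lmap_eq)
qed

lemma hom_sc: assumes q: "qcat Q A" and p: "p \<in> cobj (symcomp Q (symz Q A))"
  and q': "q' \<in> cobj (symcomp Q (symz Q A))"
  shows "chom (symcomp Q (symz Q A)) q' p = Rh A (fst q') (snd q') (fst p) (snd p)"
proof -
  have cs: "ctyped (symz Q A)" by (rule symz_ctyped[OF qcat_ctyped[OF q]])
  note P = sc_obj[OF q q']
  show ?thesis using cc_hom_eq[OF cs P(2) P(4) P(1), of p] by (simp add: Rh_def)
qed

lemma hom_L: assumes q: "qcat Q A" and p: "p \<in> cobj (symcomp Q (symz Q A))"
  and q': "q' \<in> cobj (symcomp Q (symz Q A))"
  shows "chom (symz Q (cauchy Q A)) (Lmap Q A q') (Lmap Q A p) = Rh A (fst q') (snd q') (fst p) (snd p)"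
proof -
  note c = qcat_ctyped[OF q]
  note Pp = sc_obj[OF q p] and Pq = sc_obj[OF q q']
  note Lp = L_obj[OF q p] and Lq = L_obj[OF q q']
  have e1: "cc_hom Q A (Lmap Q A q') (Lmap Q A p) = Mh A (fst q') (snd q') (fst p) (snd p)"
    using cc_hom_eq[of A "Lmap Q A q'" "Lr A (fst q') (snd q')" "Lmap Q A p"] c Lq
    by (simp add: Lmap_eq Mh_def)
  have e2: "cc_hom Q A (Lmap Q A p) (Lmap Q A q') = Mh A (fst p) (snd p) (fst q') (snd q')"
    using cc_hom_eq[of A "Lmap Q A p" "Lr A (fst p) (snd p)" "Lmap Q A q'"] c Lp
    by (simp add: Lmap_eq Mh_def)
  show ?thesis using e1 e2 FF[OF q Pp(1) Pq(1)] by (simp add: Lmap_eq)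
qed

lemma part1: assumes q: "qcat Q A"
  shows "full_embedding Q (symcomp Q (symz Q A)) (symz Q (cauchy Q A)) (Lmap Q A)"
proof -
  have homeq: "\<forall>x\<in>cobj (symcomp Q (symz Q A)). \<forall>y\<in>cobj (symcomp Q (symz Q A)).
      chom (symz Q (cauchy Q A)) (Lmap Q A y) (Lmap Q A x) = chom (symcomp Q (symz Q A)) y x"
    using hom_L[OF q] hom_sc[OF q] by simp
  have objs: "\<forall>x\<in>cobj (symcomp Q (symz Q A)). Lmap Q A x \<in> cobj (symz Q (cauchy Q A))
      \<and> ctype (symz Q (cauchy Q A)) (Lmap Q A x) = ctype (symcomp Q (symz Q A)) x"
    using L_obj[OF q] by (auto simp: Lmap_eq)
  have le: "\<forall>x\<in>cobj (symcomp Q (symz Q A)). \<forall>y\<in>cobj (symcomp Q (symz Q A)).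
      qle Q (chom (symcomp Q (symz Q A)) y x) (chom (symz Q (cauchy Q A)) (Lmap Q A y) (Lmap Q A x))"
  proof (intro ballI)
    fix x y assume x: "x \<in> cobj (symcomp Q (symz Q A))" and y: "y \<in> cobj (symcomp Q (symz Q A))"
    have "arr (chom (symcomp Q (symz Q A)) y x)"
      using hom_sc[OF q x y] MR_typ(4)[OF q sc_obj(1)[OF q x] sc_obj(1)[OF q y]] by simp
    then show "qle Q (chom (symcomp Q (symz Q A)) y x) (chom (symz Q (cauchy Q A)) (Lmap Q A y) (Lmap Q A x))"
      using homeq x y by simp
  qed
  have inj: "inj_on (Lmap Q A) (cobj (symcomp Q (symz Q A)))"
  proof (rule inj_onI)
    fix x y assume x: "x \<in> cobj (symcomp Q (symz Q A))" and y: "y \<in> cobj (symcomp Q (symz Q A))"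
      and e: "Lmap Q A x = Lmap Q A y"
    note Px = sc_obj[OF q x] and Py = sc_obj[OF q y]
    have f: "fst x = fst y" using e by (simp add: Lmap_eq)
    have h1: "Rh A (fst y) (snd y) (fst x) (snd x) = Rh A (fst x) (snd x) (fst x) (snd x)"
      using hom_L[OF q x y] hom_L[OF q x x] e by simp
    have h2: "Rh A (fst x) (snd x) (fst y) (snd y) = Rh A (fst x) (snd x) (fst x) (snd x)"
      using hom_L[OF q y x] hom_L[OF q x x] e by simp
    have one: "LE (one (fst x)) (Rh A (fst x) (snd x) (fst x) (snd x))"
      using ladjD(10)[OF Px(1)] by (simp add: Rh_def)
    have Py': "ladj (symz Q A) (fst x) (snd y) (\<lambda>z. iv (snd y z))" using Py(1) f by simp
    have "\<forall>z\<in>cobj A. snd x z = snd y z"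
    proof
      fix z assume z: "z \<in> cobj A"
      have a: "LE (snd y z) (snd x z)"
        by (rule Sep[OF q Px(1) Py' _ z]) (use one h1 f in simp)
      have b: "LE (snd x z) (snd y z)"
        by (rule Sep[OF q Py' Px(1) _ z]) (use one h2 f in simp)
      show "snd x z = snd y z" by (rule LE_antisym[OF b a])
    qed
    then have "snd x = snd y" using Px(3) Py(3) unfolding extensional_on_def by (metis ext)
    then show "x = y" using f by (simp add: prod_eq_iff)
  qed
  show ?thesis unfolding full_embedding_def qfunctor_def using homeq objs le inj by blast
qed

end

context IQ begin

lemma functorD: assumes "qcat Q A" "qcat Q B" "qfunctor Q A B F"
  shows "\<And>x. x \<in> cobj A \<Longrightarrow> F x \<in> cobj B" "\<And>x. x \<in> cobj A \<Longrightarrow> ctype B (F x) = ctype A x"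
    "\<And>x y. x \<in> cobj A \<Longrightarrow> y \<in> cobj A \<Longrightarrow> LE (chom A y x) (chom B (F y) (F x))"
  using assms qcat_ctyped[OF assms(1)] qcat_ctyped[OF assms(2)]
  by (auto simp: qfunctor_def LE_def)

definition Nn where "Nn A B F X \<phi> b = J X (ctype B b) ((\<lambda>y. cp (chom B b (F y)) (\<phi> y)) ` cobj A)"

lemma nat_L: assumes qA: "qcat Q A" and qB: "qcat Q B" and Fu: "qfunctor Q A B F"
  and S: "ladj (symz Q A) X \<phi> (\<lambda>y. iv (\<phi> y))" and b: "b \<in> cobj B"
  shows "J X (ctype B b) ((\<lambda>a. cp (chom B b (F a)) (Lf A X \<phi> a)) ` cobj A) = Nn A B F X \<phi> b"
proof -
  note cA = qcat_ctyped[OF qA] and cB = qcat_ctyped[OF qB] and Fa = symz_ladj_facts[OF S]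
  note FD = functorD[OF qA qB Fu] and LfF = Lf_facts[OF qA S]
  have ty: "arr (Nn A B F X \<phi> b)" "dm (Nn A B F X \<phi> b) = X" "cd (Nn A B F X \<phi> b) = ctype B b"
    using cA cB Fa FD b by (auto simp: Nn_def)
  show ?thesis
  proof (rule LE_antisym)
    show "LE (J X (ctype B b) ((\<lambda>a. cp (chom B b (F a)) (Lf A X \<phi> a)) ` cobj A)) (Nn A B F X \<phi> b)"
    proof (rule JI_least)
      fix a assume a: "a \<in> cobj A"
      have "cp (chom B b (F a)) (Lf A X \<phi> a) = J X (ctype B b) ((\<lambda>y. cp (chom B b (F a)) (cp (chom A a y) (\<phi> y))) ` cobj A)"
        unfolding LfF(1)[OF a] by (rule cp_JI_r) (use cA cB Fa FD b a in auto)
      also have "LE \<dots> (Nn A B F X \<phi> b)"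
      proof (rule JI_least)
        fix y assume y: "y \<in> cobj A"
        have "cp (chom B b (F a)) (cp (chom A a y) (\<phi> y)) = cp (cp (chom B b (F a)) (chom A a y)) (\<phi> y)"
          using cA cB Fa FD b a y by (simp add: assoc)
        also have "LE \<dots> (cp (cp (chom B b (F a)) (chom B (F a) (F y))) (\<phi> y))"
          by (rule LE_cp_r[OF LE_cp_l[OF FD(3)]]) (use cA cB Fa FD b a y in auto)
        also have "LE \<dots> (cp (chom B b (F y)) (\<phi> y))"
          by (rule LE_cp_r[OF qcat_comp[OF qB]]) (use cA cB Fa FD b a y in auto)
        also have "LE \<dots> (Nn A B F X \<phi> b)" unfolding Nn_def
          by (rule JI_upper[of y "cobj A" X "ctype B b" "\<lambda>y. cp (chom B b (F y)) (\<phi> y)", simplified])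
            (use cA cB Fa FD b y in auto)
        finally show "LE (cp (chom B b (F a)) (cp (chom A a y) (\<phi> y))) (Nn A B F X \<phi> b)" .
      qed (use cA cB Fa FD b a ty in auto)
      finally show "LE (cp (chom B b (F a)) (Lf A X \<phi> a)) (Nn A B F X \<phi> b)" .
    qed (use cA cB Fa FD b ty LfF(2-4) in auto)
    show "LE (Nn A B F X \<phi> b) (J X (ctype B b) ((\<lambda>a. cp (chom B b (F a)) (Lf A X \<phi> a)) ` cobj A))"
      unfolding Nn_def
    proof (rule JI_least)
      fix y assume y: "y \<in> cobj A"
      have "LE (cp (chom B b (F y)) (\<phi> y)) (cp (chom B b (F y)) (Lf A X \<phi> y))"
        by (rule LE_cp_l[OF phi_le_Lf[OF qA S y]]) (use cA cB Fa FD b y in auto)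
      also have "LE \<dots> (J X (ctype B b) ((\<lambda>a. cp (chom B b (F a)) (Lf A X \<phi> a)) ` cobj A))"
        by (rule JI_upper[of y "cobj A" X "ctype B b" "\<lambda>a. cp (chom B b (F a)) (Lf A X \<phi> a)", simplified])
          (use cA cB Fa FD b y LfF(2-4) in auto)
      finally show "LE (cp (chom B b (F y)) (\<phi> y)) (J X (ctype B b) ((\<lambda>a. cp (chom B b (F a)) (Lf A X \<phi> a)) ` cobj A))" .
    qed (use cA cB Fa FD b LfF(2-4) in auto)
  qed
qed

definition Gm where "Gm A B F X \<phi> = (\<lambda>b'. if b' \<in> cobj B then
   J X (ctype B b') ((\<lambda>y. cp (chom (symz Q B) b' (F y)) (\<phi> y)) ` cobj A) else undefined)"

lemma nat_R: assumes qA: "qcat Q A" and qB: "qcat Q B" and Fu: "qfunctor Q A B F"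
  and S: "ladj (symz Q A) X \<phi> (\<lambda>y. iv (\<phi> y))" and b: "b \<in> cobj B"
  shows "J X (ctype B b) ((\<lambda>b'. cp (chom B b b') (Gm A B F X \<phi> b')) ` cobj B) = Nn A B F X \<phi> b"
proof -
  note cA = qcat_ctyped[OF qA] and cB = qcat_ctyped[OF qB] and Fa = symz_ladj_facts[OF S]
  note FD = functorD[OF qA qB Fu]
  note sm = symz_meet[OF cB]
  have ty: "arr (Nn A B F X \<phi> b)" "dm (Nn A B F X \<phi> b) = X" "cd (Nn A B F X \<phi> b) = ctype B b"
    using cA cB Fa FD b by (auto simp: Nn_def)
  have smF: "arr (chom (symz Q B) b' (F y)) \<and> dm (chom (symz Q B) b' (F y)) = ctype A y
      \<and> cd (chom (symz Q B) b' (F y)) = ctype B b'" if "b' \<in> cobj B" "y \<in> cobj A" for b' y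
    using sm(1-3)[of "F y" b'] FD(1,2)[of y] that by simp
  have smFF: "arr (chom (symz Q B) (F y) (F i)) \<and> dm (chom (symz Q B) (F y) (F i)) = ctype A i
      \<and> cd (chom (symz Q B) (F y) (F i)) = ctype A y" if "i \<in> cobj A" "y \<in> cobj A" for i y
    using sm(1-3)[of "F i" "F y"] FD(1,2) that by simp
  have Gty: "arr (Gm A B F X \<phi> b')" "dm (Gm A B F X \<phi> b') = X" "cd (Gm A B F X \<phi> b') = ctype B b'"
    if b': "b' \<in> cobj B" for b'
    using cA cB Fa FD b' smF by (auto simp: Gm_def)
  show ?thesis
  proof (rule LE_antisym)
    show "LE (J X (ctype B b) ((\<lambda>b'. cp (chom B b b') (Gm A B F X \<phi> b')) ` cobj B)) (Nn A B F X \<phi> b)"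
    proof (rule JI_least)
      fix a assume a: "a \<in> cobj B"
      have "cp (chom B b a) (Gm A B F X \<phi> a) = J X (ctype B b) ((\<lambda>y. cp (chom B b a) (cp (chom (symz Q B) a (F y)) (\<phi> y))) ` cobj A)"
      proof -
        have "Gm A B F X \<phi> a = J X (ctype B a) ((\<lambda>y. cp (chom (symz Q B) a (F y)) (\<phi> y)) ` cobj A)"
          using a by (simp add: Gm_def)
        moreover have "cp (chom B b a) (J X (ctype B a) ((\<lambda>y. cp (chom (symz Q B) a (F y)) (\<phi> y)) ` cobj A))
          = J X (ctype B b) ((\<lambda>y. cp (chom B b a) (cp (chom (symz Q B) a (F y)) (\<phi> y))) ` cobj A)"
          by (rule cp_JI_r) (use cA cB Fa FD b a smF in auto)
        ultimately show ?thesis by simp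
      qed
      also have "LE \<dots> (Nn A B F X \<phi> b)"
      proof (rule JI_least)
        fix y assume y: "y \<in> cobj A"
        have "cp (chom B b a) (cp (chom (symz Q B) a (F y)) (\<phi> y)) = cp (cp (chom B b a) (chom (symz Q B) a (F y))) (\<phi> y)"
          using cA cB Fa FD b a y smF[of a y] by (simp add: assoc)
        also have "LE \<dots> (cp (cp (chom B b a) (chom B a (F y))) (\<phi> y))"
          by (rule LE_cp_r[OF LE_cp_l[OF sm(4)]]) (use cA cB Fa FD b a y smF[of a y] in auto)
        also have "LE \<dots> (cp (chom B b (F y)) (\<phi> y))"
          by (rule LE_cp_r[OF qcat_comp[OF qB]]) (use cA cB Fa FD b a y in auto)
        also have "LE \<dots> (Nn A B F X \<phi> b)" unfolding Nn_def
          by (rule JI_upper[of y "cobj A" X "ctype B b" "\<lambda>y. cp (chom B b (F y)) (\<phi> y)", simplified])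
            (use cA cB Fa FD b y in auto)
        finally show "LE (cp (chom B b a) (cp (chom (symz Q B) a (F y)) (\<phi> y))) (Nn A B F X \<phi> b)" .
      qed (use cA cB Fa FD b a ty smF in auto)
      finally show "LE (cp (chom B b a) (Gm A B F X \<phi> a)) (Nn A B F X \<phi> b)" .
    qed (use cA cB Fa FD b ty Gty in auto)
    show "LE (Nn A B F X \<phi> b) (J X (ctype B b) ((\<lambda>b'. cp (chom B b b') (Gm A B F X \<phi> b')) ` cobj B))"
      unfolding Nn_def
    proof (rule JI_least)
      fix y assume y: "y \<in> cobj A"
      have Fy: "F y \<in> cobj B" using FD y by auto
      have "LE (\<phi> y) (cp (chom (symz Q B) (F y) (F y)) (\<phi> y))"
        by (rule LE_one_l[OF symz_id[OF qB Fy]]) (use Fa FD y in auto)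
      also have "LE \<dots> (J X (ctype B (F y)) ((\<lambda>y'. cp (chom (symz Q B) (F y) (F y')) (\<phi> y')) ` cobj A))"
        by (rule JI_upper[of y "cobj A" X "ctype B (F y)" "\<lambda>y'. cp (chom (symz Q B) (F y) (F y')) (\<phi> y')"])
          (use cA cB Fa FD y smFF in auto)
      also have "\<dots> = Gm A B F X \<phi> (F y)" using Fy by (simp add: Gm_def)
      finally have "LE (\<phi> y) (Gm A B F X \<phi> (F y))" .
      then have "LE (cp (chom B b (F y)) (\<phi> y)) (cp (chom B b (F y)) (Gm A B F X \<phi> (F y)))"
        by (rule LE_cp_l) (use cA cB Fa FD b y in auto)
      also have "LE \<dots> (J X (ctype B b) ((\<lambda>b'. cp (chom B b b') (Gm A B F X \<phi> b')) ` cobj B))"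
        by (rule JI_upper[of "F y" "cobj B" X "ctype B b" "\<lambda>b'. cp (chom B b b') (Gm A B F X \<phi> b')", simplified])
          (use cA cB Fa FD b Fy Gty in auto)
      finally show "LE (cp (chom B b (F y)) (\<phi> y)) (J X (ctype B b) ((\<lambda>b'. cp (chom B b b') (Gm A B F X \<phi> b')) ` cobj B))" .
    qed (use cA cB Fa FD b Gty in auto)
  qed
qed

lemma part2: assumes qA: "qcat Q A" and qB: "qcat Q B" and Fu: "qfunctor Q A B F"
  and p: "p \<in> cobj (symcomp Q (symz Q A))"
  shows "cc_map Q A B F (Lmap Q A p) = Lmap Q B (cc_map Q (symz Q A) (symz Q B) F p)"
proof -
  note P = sc_obj[OF qA p]
  have e1: "cc_map Q (symz Q A) (symz Q B) F p = (fst p, Gm A B F (fst p) (snd p))"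
    unfolding cc_map_def pres_comp_eq Gm_def by (simp cong: if_cong)
  have "snd (cc_map Q A B F (Lmap Q A p)) = snd (Lmap Q B (cc_map Q (symz Q A) (symz Q B) F p))"
  proof (rule ext)
    fix b
    show "snd (cc_map Q A B F (Lmap Q A p)) b = snd (Lmap Q B (cc_map Q (symz Q A) (symz Q B) F p)) b"
    proof (cases "b \<in> cobj B")
      case True
      show ?thesis unfolding e1 unfolding Lmap_eq unfolding cc_map_def pres_comp_eq
        using nat_L[OF qA qB Fu P(1) True] nat_R[OF qA qB Fu P(1) True] True
        by (simp add: Lf_def)
    next
      case False
      show ?thesis unfolding e1 unfolding Lmap_eq unfolding cc_map_def pres_comp_eq
        using False by (simp add: Lf_def)
    qed
  qed
  moreover have "fst (cc_map Q A B F (Lmap Q A p)) = fst (Lmap Q B (cc_map Q (symz Q A) (symz Q B) F p))"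
    unfolding e1 unfolding Lmap_eq unfolding cc_map_def pres_comp_eq by simp
  ultimately show ?thesis by (simp add: prod_eq_iff)
qed

end

context IQ begin

declare cauchy_simps(3)[simp del]

definition ra where "ra A p = right_adj Q A (fst p) (snd p) ()"

lemma cch: "cc_hom Q A p q = J (fst q) (fst p) ((\<lambda>y. cp (ra A p y) (snd q y)) ` cobj A)"
  unfolding cc_hom_def dcomp_def unit_cat_def as_dist_def ra_def by simp

lemma Cobj: assumes "ctyped A" "p \<in> cobj (cauchy Q A)"
  shows "ladj A (fst p) (snd p) (ra A p)" "fst p \<in> Ob" "extensional_on (cobj A) (snd p)"
  using assms RA_ladj[of A "fst p" "snd p"] by (auto simp: cauchy_simps ra_def)

lemma Cf: assumes c: "ctyped A" and p: "p \<in> cobj (cauchy Q A)"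
  shows "fst p \<in> Ob" "\<And>a. a \<in> cobj A \<Longrightarrow> arr (snd p a)" "\<And>a. a \<in> cobj A \<Longrightarrow> dm (snd p a) = fst p"
    "\<And>a. a \<in> cobj A \<Longrightarrow> cd (snd p a) = ctype A a"
    "\<And>a. a \<in> cobj A \<Longrightarrow> arr (ra A p a)" "\<And>a. a \<in> cobj A \<Longrightarrow> dm (ra A p a) = ctype A a"
    "\<And>a. a \<in> cobj A \<Longrightarrow> cd (ra A p a) = fst p"
  using ladjD[OF Cobj(1)[OF c p]] by auto

lemma Ch: assumes c: "ctyped A" and p: "p \<in> cobj (cauchy Q A)" and q: "q \<in> cobj (cauchy Q A)"
  shows "arr (cc_hom Q A p q)" "dm (cc_hom Q A p q) = fst q" "cd (cc_hom Q A p q) = fst p"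
  unfolding cch using Cf[OF c p] Cf[OF c q] c Cobj(2)[OF c p] Cobj(2)[OF c q] by auto

lemma C_ctyped: assumes c: "ctyped A" shows "ctyped (cauchy Q A)"
  unfolding ctyped_def[of "cauchy Q A"] using Ch[OF c] Cobj(2)[OF c] by simp

lemma C_id: assumes c: "ctyped A" and p: "p \<in> cobj (cauchy Q A)"
  shows "LE (one (fst p)) (cc_hom Q A p p)"
  unfolding cch using ladjD(10)[OF Cobj(1)[OF c p]] .

lemma Kc: assumes c: "ctyped A" and p: "p \<in> cobj (cauchy Q A)" and p': "p' \<in> cobj (cauchy Q A)"
  and a: "a \<in> cobj A"
  shows "LE (cp (cc_hom Q A p p') (ra A p' a)) (ra A p a)"
proof -
  note Lp = ladjD[OF Cobj(1)[OF c p]] and Lp' = ladjD[OF Cobj(1)[OF c p']]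
  have "cp (cc_hom Q A p p') (ra A p' a) = J (ctype A a) (fst p) ((\<lambda>b. cp (cp (ra A p b) (snd p' b)) (ra A p' a)) ` cobj A)"
    unfolding cch by (rule cp_JI_l) (use Cf[OF c p] Cf[OF c p'] a c in auto)
  also have "LE \<dots> (ra A p a)"
  proof (rule JI_least)
    fix b assume b: "b \<in> cobj A"
    have "cp (cp (ra A p b) (snd p' b)) (ra A p' a) = cp (ra A p b) (cp (snd p' b) (ra A p' a))"
      using Cf[OF c p] Cf[OF c p'] a b c by (simp add: assoc)
    also have "LE \<dots> (cp (ra A p b) (chom A b a))"
      by (rule LE_cp_l[OF Lp'(11)]) (use Cf[OF c p] Cf[OF c p'] a b c in auto)
    also have "LE \<dots> (ra A p a)" by (rule Lp(9)[OF b a])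
    finally show "LE (cp (cp (ra A p b) (snd p' b)) (ra A p' a)) (ra A p a)" .
  qed (use Cf[OF c p] Cf[OF c p'] a c in auto)
  finally show ?thesis .
qed

lemma C_comp: assumes c: "ctyped A" and p: "p \<in> cobj (cauchy Q A)" and q: "q \<in> cobj (cauchy Q A)"
  and r: "r \<in> cobj (cauchy Q A)"
  shows "LE (cp (cc_hom Q A r q) (cc_hom Q A q p)) (cc_hom Q A r p)"
  unfolding cch[of A r q] cch[of A q p]
proof (rule cp_JJ_le)
  note Lq = ladjD[OF Cobj(1)[OF c q]] and Lr = ladjD[OF Cobj(1)[OF c r]]
  fix y z assume y: "y \<in> cobj A" and z: "z \<in> cobj A"
  have "cp (cp (ra A r y) (snd q y)) (cp (ra A q z) (snd p z)) = cp (ra A r y) (cp (cp (snd q y) (ra A q z)) (snd p z))"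
    using Cf[OF c p] Cf[OF c q] Cf[OF c r] y z c by (simp add: assoc)
  also have "LE \<dots> (cp (ra A r y) (cp (chom A y z) (snd p z)))"
    by (rule LE_cp_l[OF LE_cp_r[OF Lq(11)]]) (use Cf[OF c p] Cf[OF c q] Cf[OF c r] y z c in auto)
  also have "\<dots> = cp (cp (ra A r y) (chom A y z)) (snd p z)"
    using Cf[OF c p] Cf[OF c q] Cf[OF c r] y z c by (simp add: assoc)
  also have "LE \<dots> (cp (ra A r z) (snd p z))"
    by (rule LE_cp_r[OF Lr(9)]) (use Cf[OF c p] Cf[OF c q] Cf[OF c r] y z c in auto)
  also have "LE \<dots> (cc_hom Q A r p)" unfolding cch
    by (rule JI_upper[of z "cobj A" "fst p" "fst r" "\<lambda>y. cp (ra A r y) (snd p y)"])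
      (use Cf[OF c p] Cf[OF c r] z c in auto)
  finally show "LE (cp (cp (ra A r y) (snd q y)) (cp (ra A q z) (snd p z))) (cc_hom Q A r p)" .
qed (use Cf[OF c p] Cf[OF c q] Cf[OF c r] c Ch[OF c r p] in auto)

definition Phc where "Phc A \<Phi> X = (\<lambda>a. if a \<in> cobj A then
   J X (ctype A a) ((\<lambda>p. cp (snd p a) (\<Phi> p)) ` cobj (cauchy Q A)) else undefined)"
definition Rho where "Rho A \<Phi> X = (\<lambda>a.
   J (ctype A a) X ((\<lambda>p. cp (iv (\<Phi> p)) (ra A p a)) ` cobj (cauchy Q A)))"

context fixes A :: "('a,'o,'m) qcat" and \<Phi> X
  assumes q: "qcat Q A" and X: "X \<in> Ob"
  and SD: "ladj (symz Q (cauchy Q A)) X \<Phi> (\<lambda>p. iv (\<Phi> p))"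
begin

lemma c: "ctyped A" by (rule qcat_ctyped[OF q])
lemma cC: "ctyped (cauchy Q A)" by (rule C_ctyped[OF c])

lemma SDf: "p \<in> cobj (cauchy Q A) \<Longrightarrow> arr (\<Phi> p)" "p \<in> cobj (cauchy Q A) \<Longrightarrow> dm (\<Phi> p) = X"
  "p \<in> cobj (cauchy Q A) \<Longrightarrow> cd (\<Phi> p) = fst p"
  using ladjD(2-4)[OF SD] by auto

lemma DDf: assumes "p \<in> cobj (cauchy Q A)" "p' \<in> cobj (cauchy Q A)"
  shows "arr (chom (symz Q (cauchy Q A)) p p')" "dm (chom (symz Q (cauchy Q A)) p p') = fst p'"
    "cd (chom (symz Q (cauchy Q A)) p p') = fst p"
    "LE (chom (symz Q (cauchy Q A)) p p') (cc_hom Q A p p')"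
    "LE (chom (symz Q (cauchy Q A)) p p') (iv (cc_hom Q A p' p))"
  using symz_meet[OF cC assms(2) assms(1)] by simp_all

lemma S5: "p \<in> cobj (cauchy Q A) \<Longrightarrow> p' \<in> cobj (cauchy Q A) \<Longrightarrow>
   LE (cp (chom (symz Q (cauchy Q A)) p' p) (\<Phi> p)) (\<Phi> p')"
  using ladjD(5)[OF SD] by simp
lemma S9: "p \<in> cobj (cauchy Q A) \<Longrightarrow> p' \<in> cobj (cauchy Q A) \<Longrightarrow>
   LE (cp (iv (\<Phi> p)) (chom (symz Q (cauchy Q A)) p p')) (iv (\<Phi> p'))"
  using ladjD(9)[OF SD] by simp
lemma S10: "LE (one X) (J X X ((\<lambda>p. cp (iv (\<Phi> p)) (\<Phi> p)) ` cobj (cauchy Q A)))"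
  using ladjD(10)[OF SD] by simp
lemma S11: "p \<in> cobj (cauchy Q A) \<Longrightarrow> p' \<in> cobj (cauchy Q A) \<Longrightarrow>
   LE (cp (\<Phi> p') (iv (\<Phi> p))) (chom (symz Q (cauchy Q A)) p' p)"
  using ladjD(11)[OF SD] by simp

lemma PR_ty: assumes a: "a \<in> cobj A"
  shows "arr (Phc A \<Phi> X a)" "dm (Phc A \<Phi> X a) = X" "cd (Phc A \<Phi> X a) = ctype A a"
    "arr (Rho A \<Phi> X a)" "dm (Rho A \<Phi> X a) = ctype A a" "cd (Rho A \<Phi> X a) = X"
    "Phc A \<Phi> X a = J X (ctype A a) ((\<lambda>p. cp (snd p a) (\<Phi> p)) ` cobj (cauchy Q A))"
  using a X c SDf Cf[OF c] by (auto simp: Phc_def Rho_def)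

lemma P_ladj: "ladj A X (Phc A \<Phi> X) (Rho A \<Phi> X)"
proof -
  note CF = Cf[OF c] and PR = PR_ty
  have i1: "\<forall>a\<in>cobj A. \<forall>a'\<in>cobj A. LE (cp (chom A a' a) (Phc A \<Phi> X a)) (Phc A \<Phi> X a')"
  proof (intro ballI)
    fix a a' assume a: "a \<in> cobj A" and a': "a' \<in> cobj A"
    have "cp (chom A a' a) (Phc A \<Phi> X a) = J X (ctype A a') ((\<lambda>p. cp (chom A a' a) (cp (snd p a) (\<Phi> p))) ` cobj (cauchy Q A))"
      unfolding PR(7)[OF a] by (rule cp_JI_r) (use a a' c CF SDf X in auto)
    also have "LE \<dots> (Phc A \<Phi> X a')" unfolding PR(7)[OF a']
    proof (rule JI_mono)
      fix p assume p: "p \<in> cobj (cauchy Q A)"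
      have "cp (chom A a' a) (cp (snd p a) (\<Phi> p)) = cp (cp (chom A a' a) (snd p a)) (\<Phi> p)"
        using a a' c CF[OF p] SDf[OF p] by (simp add: assoc)
      also have "LE \<dots> (cp (snd p a') (\<Phi> p))"
        by (rule LE_cp_r[OF ladjD(5)[OF Cobj(1)[OF c p] a a']]) (use a a' c CF[OF p] SDf[OF p] in auto)
      finally show "LE (cp (chom A a' a) (cp (snd p a) (\<Phi> p))) (cp (snd p a') (\<Phi> p))" .
    qed (use a a' c CF SDf X in auto)
    finally show "LE (cp (chom A a' a) (Phc A \<Phi> X a)) (Phc A \<Phi> X a')" .
  qed
  have i2: "\<forall>x\<in>cobj A. \<forall>x'\<in>cobj A. LE (cp (Rho A \<Phi> X x) (chom A x x')) (Rho A \<Phi> X x')"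
  proof (intro ballI)
    fix a a' assume a: "a \<in> cobj A" and a': "a' \<in> cobj A"
    have "cp (Rho A \<Phi> X a) (chom A a a') = J (ctype A a') X ((\<lambda>p. cp (cp (iv (\<Phi> p)) (ra A p a)) (chom A a a')) ` cobj (cauchy Q A))"
      unfolding Rho_def by (rule cp_JI_l) (use a a' c CF SDf X in auto)
    also have "LE \<dots> (Rho A \<Phi> X a')" unfolding Rho_def
    proof (rule JI_mono)
      fix p assume p: "p \<in> cobj (cauchy Q A)"
      have "cp (cp (iv (\<Phi> p)) (ra A p a)) (chom A a a') = cp (iv (\<Phi> p)) (cp (ra A p a) (chom A a a'))"
        using a a' c CF[OF p] SDf[OF p] by (simp add: assoc)
      also have "LE \<dots> (cp (iv (\<Phi> p)) (ra A p a'))"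
        by (rule LE_cp_l[OF ladjD(9)[OF Cobj(1)[OF c p] a a']]) (use a a' c CF[OF p] SDf[OF p] in auto)
      finally show "LE (cp (cp (iv (\<Phi> p)) (ra A p a)) (chom A a a')) (cp (iv (\<Phi> p)) (ra A p a'))" .
    qed (use a a' c CF SDf X in auto)
    finally show "LE (cp (Rho A \<Phi> X a) (chom A a a')) (Rho A \<Phi> X a')" .
  qed
  let ?T = "J X X ((\<lambda>a. cp (Rho A \<Phi> X a) (Phc A \<Phi> X a)) ` cobj A)"
  have Tty: "arr ?T" "dm ?T = X" "cd ?T = X" using X PR(1-6) by auto
  have i3: "LE (one X) ?T"
  proof -
    have "LE (one X) (J X X ((\<lambda>p. cp (iv (\<Phi> p)) (\<Phi> p)) ` cobj (cauchy Q A)))" by (rule S10)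
    also have "LE \<dots> ?T"
    proof (rule JI_least)
      fix p assume p: "p \<in> cobj (cauchy Q A)"
      note Lp = ladjD[OF Cobj(1)[OF c p]]
      have "cp (iv (\<Phi> p)) (\<Phi> p) = cp (iv (\<Phi> p)) (cp (one (fst p)) (\<Phi> p))" using SDf[OF p] by simp
      also have "LE \<dots> (cp (iv (\<Phi> p)) (cp (J (fst p) (fst p) ((\<lambda>a. cp (ra A p a) (snd p a)) ` cobj A)) (\<Phi> p)))"
        by (rule LE_cp_l[OF LE_cp_r[OF Lp(10)]]) (use SDf[OF p] CF[OF p] in auto)
      also have "cp (J (fst p) (fst p) ((\<lambda>a. cp (ra A p a) (snd p a)) ` cobj A)) (\<Phi> p)
          = J X (fst p) ((\<lambda>a. cp (cp (ra A p a) (snd p a)) (\<Phi> p)) ` cobj A)"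
        by (rule cp_JI_l) (use SDf[OF p] CF[OF p] in auto)
      also have "cp (iv (\<Phi> p)) (J X (fst p) ((\<lambda>a. cp (cp (ra A p a) (snd p a)) (\<Phi> p)) ` cobj A))
          = J X X ((\<lambda>a. cp (iv (\<Phi> p)) (cp (cp (ra A p a) (snd p a)) (\<Phi> p))) ` cobj A)"
        by (rule cp_JI_r) (use SDf[OF p] CF[OF p] X in auto)
      also have "LE \<dots> ?T"
      proof (rule JI_mono)
        fix a assume a: "a \<in> cobj A"
        have "cp (iv (\<Phi> p)) (cp (cp (ra A p a) (snd p a)) (\<Phi> p)) = cp (cp (iv (\<Phi> p)) (ra A p a)) (cp (snd p a) (\<Phi> p))"
          using SDf[OF p] CF[OF p] a by (simp add: assoc)
        also have "LE \<dots> (cp (Rho A \<Phi> X a) (Phc A \<Phi> X a))"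
        proof (rule LE_cp)
          show "LE (cp (snd p a) (\<Phi> p)) (Phc A \<Phi> X a)" unfolding PR(7)[OF a]
            by (rule JI_upper[of p "cobj (cauchy Q A)" X "ctype A a" "\<lambda>p. cp (snd p a) (\<Phi> p)"])
              (use SDf CF a X c p in auto)
          show "LE (cp (iv (\<Phi> p)) (ra A p a)) (Rho A \<Phi> X a)" unfolding Rho_def
            by (rule JI_upper[of p "cobj (cauchy Q A)" "ctype A a" X "\<lambda>p. cp (iv (\<Phi> p)) (ra A p a)"])
              (use SDf CF a X c p in auto)
        qed (use SDf[OF p] CF[OF p] a in auto)
        finally show "LE (cp (iv (\<Phi> p)) (cp (cp (ra A p a) (snd p a)) (\<Phi> p))) (cp (Rho A \<Phi> X a) (Phc A \<Phi> X a))" .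
      qed (use SDf[OF p] CF[OF p] X PR(1-6) in auto)
      finally show "LE (cp (iv (\<Phi> p)) (\<Phi> p)) ?T" .
    qed (use SDf X Tty in auto)
    finally show ?thesis .
  qed
  have i4: "\<forall>a\<in>cobj A. \<forall>a'\<in>cobj A. LE (cp (Phc A \<Phi> X a') (Rho A \<Phi> X a)) (chom A a' a)"
  proof (intro ballI)
    fix a a' assume a: "a \<in> cobj A" and a': "a' \<in> cobj A"
    show "LE (cp (Phc A \<Phi> X a') (Rho A \<Phi> X a)) (chom A a' a)"
      unfolding PR(7)[OF a'] Rho_def
    proof (rule cp_JJ_le)
      fix p p' assume p: "p \<in> cobj (cauchy Q A)" and p': "p' \<in> cobj (cauchy Q A)"
      note Lp = ladjD[OF Cobj(1)[OF c p]]
      have "cp (cp (snd p a') (\<Phi> p)) (cp (iv (\<Phi> p')) (ra A p' a))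
         = cp (snd p a') (cp (cp (\<Phi> p) (iv (\<Phi> p'))) (ra A p' a))"
        using SDf[OF p] SDf[OF p'] CF[OF p] CF[OF p'] a a' by (simp add: assoc)
      also have "LE \<dots> (cp (snd p a') (cp (cc_hom Q A p p') (ra A p' a)))"
        by (rule LE_cp_l[OF LE_cp_r[OF LE_trans[OF S11[OF p' p] DDf(4)[OF p p']]]])
          (use SDf[OF p] SDf[OF p'] CF[OF p] CF[OF p'] a a' Ch[OF c p p'] in auto)
      also have "LE \<dots> (cp (snd p a') (ra A p a))"
        by (rule LE_cp_l[OF Kc[OF c p p' a]]) (use SDf[OF p] SDf[OF p'] CF[OF p] CF[OF p'] a a' Ch[OF c p p'] in auto)
      also have "LE \<dots> (chom A a' a)" by (rule Lp(11)[OF a a'])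
      finally show "LE (cp (cp (snd p a') (\<Phi> p)) (cp (iv (\<Phi> p')) (ra A p' a))) (chom A a' a)" .
    qed (use SDf CF a a' X c in auto)
  qed
  show ?thesis unfolding ladj_def using i1 i2 i3 i4 X PR(1-6) by auto
qed

lemma rC: "(X, Phc A \<Phi> X) \<in> cobj (cauchy Q A)"
proof -
  have "extensional_on (cobj A) (Phc A \<Phi> X)" by (simp add: Phc_def extensional_on_def)
  moreover have "left_adj_presheaf Q A X (Phc A \<Phi> X)" using lap_iff[OF c X] P_ladj by blast
  ultimately show ?thesis using X by (simp add: cauchy_simps)
qed

lemma ra_r: "a \<in> cobj A \<Longrightarrow> ra A (X, Phc A \<Phi> X) a = Rho A \<Phi> X a"
  using ladj_unique[OF c Cobj(1)[OF c rC] _ ] P_ladj by simp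

lemma Cr: assumes p: "p \<in> cobj (cauchy Q A)"
  shows "cc_hom Q A p (X, Phc A \<Phi> X) = J X (fst p) ((\<lambda>a. cp (ra A p a) (Phc A \<Phi> X a)) ` cobj A)"
    "cc_hom Q A (X, Phc A \<Phi> X) p = J (fst p) X ((\<lambda>a. cp (Rho A \<Phi> X a) (snd p a)) ` cobj A)"
  by (simp add: cch) (simp add: cch ra_r cong: image_cong)

lemma R1: assumes p: "p \<in> cobj (cauchy Q A)" shows "LE (\<Phi> p) (cc_hom Q A p (X, Phc A \<Phi> X))"
proof -
  note CF = Cf[OF c] and PR = PR_ty and Lp = ladjD[OF Cobj(1)[OF c p]]
  have "\<Phi> p = cp (one (fst p)) (\<Phi> p)" using SDf[OF p] by simp
  also have "LE \<dots> (cp (J (fst p) (fst p) ((\<lambda>a. cp (ra A p a) (snd p a)) ` cobj A)) (\<Phi> p))"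
    by (rule LE_cp_r[OF Lp(10)]) (use SDf[OF p] CF[OF p] in auto)
  also have "\<dots> = J X (fst p) ((\<lambda>a. cp (cp (ra A p a) (snd p a)) (\<Phi> p)) ` cobj A)"
    by (rule cp_JI_l) (use SDf[OF p] CF[OF p] in auto)
  also have "LE \<dots> (cc_hom Q A p (X, Phc A \<Phi> X))" unfolding Cr(1)[OF p]
  proof (rule JI_mono)
    fix a assume a: "a \<in> cobj A"
    have "cp (cp (ra A p a) (snd p a)) (\<Phi> p) = cp (ra A p a) (cp (snd p a) (\<Phi> p))"
      using SDf[OF p] CF[OF p] a by (simp add: assoc)
    also have "LE \<dots> (cp (ra A p a) (Phc A \<Phi> X a))"
    proof (rule LE_cp_l)
      show "LE (cp (snd p a) (\<Phi> p)) (Phc A \<Phi> X a)" unfolding PR(7)[OF a]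
        by (rule JI_upper[of p "cobj (cauchy Q A)" X "ctype A a" "\<lambda>p. cp (snd p a) (\<Phi> p)"])
          (use SDf CF a X c p in auto)
    qed (use SDf[OF p] CF[OF p] a in auto)
    finally show "LE (cp (cp (ra A p a) (snd p a)) (\<Phi> p)) (cp (ra A p a) (Phc A \<Phi> X a))" .
  qed (use SDf[OF p] CF[OF p] X PR(1-6) in auto)
  finally show ?thesis .
qed

lemma R2: assumes p: "p \<in> cobj (cauchy Q A)" shows "LE (iv (\<Phi> p)) (cc_hom Q A (X, Phc A \<Phi> X) p)"
proof -
  note CF = Cf[OF c] and PR = PR_ty and Lp = ladjD[OF Cobj(1)[OF c p]]
  have "iv (\<Phi> p) = cp (iv (\<Phi> p)) (one (fst p))" using SDf[OF p] by simp
  also have "LE \<dots> (cp (iv (\<Phi> p)) (J (fst p) (fst p) ((\<lambda>a. cp (ra A p a) (snd p a)) ` cobj A)))"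
    by (rule LE_cp_l[OF Lp(10)]) (use SDf[OF p] CF[OF p] in auto)
  also have "\<dots> = J (fst p) X ((\<lambda>a. cp (iv (\<Phi> p)) (cp (ra A p a) (snd p a))) ` cobj A)"
    by (rule cp_JI_r) (use SDf[OF p] CF[OF p] in auto)
  also have "LE \<dots> (cc_hom Q A (X, Phc A \<Phi> X) p)" unfolding Cr(2)[OF p]
  proof (rule JI_mono)
    fix a assume a: "a \<in> cobj A"
    have "cp (iv (\<Phi> p)) (cp (ra A p a) (snd p a)) = cp (cp (iv (\<Phi> p)) (ra A p a)) (snd p a)"
      using SDf[OF p] CF[OF p] a by (simp add: assoc)
    also have "LE \<dots> (cp (Rho A \<Phi> X a) (snd p a))"
    proof (rule LE_cp_r)
      show "LE (cp (iv (\<Phi> p)) (ra A p a)) (Rho A \<Phi> X a)" unfolding Rho_def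
        by (rule JI_upper[of p "cobj (cauchy Q A)" "ctype A a" X "\<lambda>p. cp (iv (\<Phi> p)) (ra A p a)"])
          (use SDf CF a X c p in auto)
    qed (use SDf[OF p] CF[OF p] a in auto)
    finally show "LE (cp (iv (\<Phi> p)) (cp (ra A p a) (snd p a))) (cp (Rho A \<Phi> X a) (snd p a))" .
  qed (use SDf[OF p] CF[OF p] X PR(1-6) in auto)
  finally show ?thesis .
qed

lemma R3: assumes p: "p \<in> cobj (cauchy Q A)"
  shows "LE (cc_hom Q A p (X, Phc A \<Phi> X)) (J X (fst p) ((\<lambda>p''. cp (cc_hom Q A p p'') (\<Phi> p'')) ` cobj (cauchy Q A)))"
  unfolding Cr(1)[OF p]
proof (rule JI_least)
  note CF = Cf[OF c] and PR = PR_ty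
  let ?T = "J X (fst p) ((\<lambda>p''. cp (cc_hom Q A p p'') (\<Phi> p'')) ` cobj (cauchy Q A))"
  fix a assume a: "a \<in> cobj A"
  have "cp (ra A p a) (Phc A \<Phi> X a) = J X (fst p) ((\<lambda>p''. cp (ra A p a) (cp (snd p'' a) (\<Phi> p''))) ` cobj (cauchy Q A))"
    unfolding PR(7)[OF a] by (rule cp_JI_r) (use SDf CF a X c p in auto)
  also have "LE \<dots> ?T"
  proof (rule JI_least)
    fix p'' assume p'': "p'' \<in> cobj (cauchy Q A)"
    have "cp (ra A p a) (cp (snd p'' a) (\<Phi> p'')) = cp (cp (ra A p a) (snd p'' a)) (\<Phi> p'')"
      using SDf[OF p''] CF[OF p] CF[OF p''] a by (simp add: assoc)
    also have "LE \<dots> (cp (cc_hom Q A p p'') (\<Phi> p''))"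
    proof (rule LE_cp_r)
      show "LE (cp (ra A p a) (snd p'' a)) (cc_hom Q A p p'')" unfolding cch
        by (rule JI_upper[of a "cobj A" "fst p''" "fst p" "\<lambda>y. cp (ra A p y) (snd p'' y)"])
          (use CF[OF p] CF[OF p''] a c in auto)
    qed (use SDf[OF p''] CF[OF p] CF[OF p''] a in auto)
    also have "LE \<dots> ?T"
      by (rule JI_upper[of p'' "cobj (cauchy Q A)" X "fst p" "\<lambda>p''. cp (cc_hom Q A p p'') (\<Phi> p'')"])
        (use SDf CF[OF p] p'' Ch[OF c p] X in auto)
    finally show "LE (cp (ra A p a) (cp (snd p'' a) (\<Phi> p''))) ?T" .
  qed (use SDf CF CF[OF p] p a X c Ch[OF c p] in auto)
  finally show "LE (cp (ra A p a) (Phc A \<Phi> X a)) ?T" .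
qed (use SDf Cf[OF c p] X c Ch[OF c p] PR_ty in auto)

lemma R4: assumes p: "p \<in> cobj (cauchy Q A)"
  shows "LE (cc_hom Q A (X, Phc A \<Phi> X) p) (J (fst p) X ((\<lambda>p''. cp (iv (\<Phi> p'')) (cc_hom Q A p'' p)) ` cobj (cauchy Q A)))"
  unfolding Cr(2)[OF p]
proof (rule JI_least)
  note CF = Cf[OF c] and PR = PR_ty
  let ?T = "J (fst p) X ((\<lambda>p''. cp (iv (\<Phi> p'')) (cc_hom Q A p'' p)) ` cobj (cauchy Q A))"
  fix a assume a: "a \<in> cobj A"
  have "cp (Rho A \<Phi> X a) (snd p a) = J (fst p) X ((\<lambda>p''. cp (cp (iv (\<Phi> p'')) (ra A p'' a)) (snd p a)) ` cobj (cauchy Q A))"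
    unfolding Rho_def by (rule cp_JI_l) (use SDf CF a X c p in auto)
  also have "LE \<dots> ?T"
  proof (rule JI_least)
    fix p'' assume p'': "p'' \<in> cobj (cauchy Q A)"
    have "cp (cp (iv (\<Phi> p'')) (ra A p'' a)) (snd p a) = cp (iv (\<Phi> p'')) (cp (ra A p'' a) (snd p a))"
      using SDf[OF p''] CF[OF p] CF[OF p''] a by (simp add: assoc)
    also have "LE \<dots> (cp (iv (\<Phi> p'')) (cc_hom Q A p'' p))"
    proof (rule LE_cp_l)
      show "LE (cp (ra A p'' a) (snd p a)) (cc_hom Q A p'' p)" unfolding cch
        by (rule JI_upper[of a "cobj A" "fst p" "fst p''" "\<lambda>y. cp (ra A p'' y) (snd p y)"])
          (use CF[OF p] CF[OF p''] a c in auto)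
    qed (use SDf[OF p''] CF[OF p] CF[OF p''] a in auto)
    also have "LE \<dots> ?T"
      by (rule JI_upper[of p'' "cobj (cauchy Q A)" "fst p" X "\<lambda>p''. cp (iv (\<Phi> p'')) (cc_hom Q A p'' p)"])
        (use SDf CF[OF p] p'' Ch[OF c _ p] X in auto)
    finally show "LE (cp (cp (iv (\<Phi> p'')) (ra A p'' a)) (snd p a)) ?T" .
  qed (use SDf CF CF[OF p] p a X c Ch[OF c _ p] in auto)
  finally show "LE (cp (Rho A \<Phi> X a) (snd p a)) ?T" .
qed (use SDf Cf[OF c p] X c Ch[OF c _ p] PR_ty in auto)

lemma rep: assumes p: "p \<in> cobj (cauchy Q A)"
  shows "\<Phi> p = chom (symz Q (cauchy Q A)) p (X, Phc A \<Phi> X)"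
proof -
  note CF = Cf[OF c] and r = rC
  let ?r = "(X, Phc A \<Phi> X)"
  let ?u = "qmeet Q X (fst p) (cc_hom Q A p ?r) (iv (cc_hom Q A ?r p))"
  have ueq: "chom (symz Q (cauchy Q A)) p ?r = ?u" by simp
  have hty: "arr (cc_hom Q A p ?r)" "dm (cc_hom Q A p ?r) = X" "cd (cc_hom Q A p ?r) = fst p"
    "arr (cc_hom Q A ?r p)" "dm (cc_hom Q A ?r p) = fst p" "cd (cc_hom Q A ?r p) = X"
    using Ch[OF c p r] Ch[OF c r p] by auto
  note mp = meet_props[of "cc_hom Q A p ?r" "iv (cc_hom Q A ?r p)" X "fst p"]
  note mp6 = meet_props(6)[of "cc_hom Q A p ?r" "iv (cc_hom Q A ?r p)" X "fst p"]
  have u: "arr ?u" "dm ?u = X" "cd ?u = fst p" "LE ?u (cc_hom Q A p ?r)" "LE ?u (iv (cc_hom Q A ?r p))"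
    using mp hty by auto
  have ge: "LE (\<Phi> p) ?u"
  proof (rule mp6)
    show "LE (\<Phi> p) (cc_hom Q A p ?r)" by (rule R1[OF p])
    show "LE (\<Phi> p) (iv (cc_hom Q A ?r p))" using LE_iv[OF R2[OF p]] SDf[OF p] by simp
  qed (use hty in auto)
  have key: "LE (cp ?u (iv (\<Phi> p'))) (chom (symz Q (cauchy Q A)) p p')" if p': "p' \<in> cobj (cauchy Q A)" for p'
  proof (rule symz_meet(6)[OF cC p' p])
    have "LE (cp ?u (iv (\<Phi> p'))) (cp (cc_hom Q A p ?r) (iv (\<Phi> p')))"
      by (rule LE_cp_r[OF u(4)]) (use u SDf[OF p'] in auto)
    also have "LE \<dots> (cp (J X (fst p) ((\<lambda>p''. cp (cc_hom Q A p p'') (\<Phi> p'')) ` cobj (cauchy Q A))) (iv (\<Phi> p')))"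
      by (rule LE_cp_r[OF R3[OF p]]) (use hty SDf[OF p'] in auto)
    also have "\<dots> = J (fst p') (fst p) ((\<lambda>p''. cp (cp (cc_hom Q A p p'') (\<Phi> p'')) (iv (\<Phi> p'))) ` cobj (cauchy Q A))"
      by (rule cp_JI_l) (use SDf SDf[OF p'] CF[OF p] Ch[OF c p] in auto)
    also have "LE \<dots> (cc_hom Q A p p')"
    proof (rule JI_least)
      fix p'' assume p'': "p'' \<in> cobj (cauchy Q A)"
      have "cp (cp (cc_hom Q A p p'') (\<Phi> p'')) (iv (\<Phi> p')) = cp (cc_hom Q A p p'') (cp (\<Phi> p'') (iv (\<Phi> p')))"
        using SDf[OF p'] SDf[OF p''] Ch[OF c p p''] by (simp add: assoc)
      also have "LE \<dots> (cp (cc_hom Q A p p'') (cc_hom Q A p'' p'))"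
        by (rule LE_cp_l[OF LE_trans[OF S11[OF p' p''] DDf(4)[OF p'' p']]])
          (use SDf[OF p'] SDf[OF p''] Ch[OF c p p''] in auto)
      also have "LE \<dots> (cc_hom Q A p p')" by (rule C_comp[OF c p' p'' p])
      finally show "LE (cp (cp (cc_hom Q A p p'') (\<Phi> p'')) (iv (\<Phi> p'))) (cc_hom Q A p p')" .
    qed (use SDf SDf[OF p'] CF[OF p] CF[OF p'] Ch[OF c p] Ch[OF c p p'] in auto)
    finally show "LE (cp ?u (iv (\<Phi> p'))) (chom (cauchy Q A) p p')" by simp
    have ivu: "LE (iv ?u) (cc_hom Q A ?r p)" using LE_iv[OF u(5)] hty by simp
    have "iv (cp ?u (iv (\<Phi> p'))) = cp (\<Phi> p') (iv ?u)"
      using u SDf[OF p'] by (simp add: iv_cp)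
    also have "LE \<dots> (cp (\<Phi> p') (cc_hom Q A ?r p))"
      by (rule LE_cp_l[OF ivu]) (use u SDf[OF p'] in auto)
    also have "LE \<dots> (cp (\<Phi> p') (J (fst p) X ((\<lambda>p''. cp (iv (\<Phi> p'')) (cc_hom Q A p'' p)) ` cobj (cauchy Q A))))"
      by (rule LE_cp_l[OF R4[OF p]]) (use hty SDf[OF p'] in auto)
    also have "\<dots> = J (fst p) (fst p') ((\<lambda>p''. cp (\<Phi> p') (cp (iv (\<Phi> p'')) (cc_hom Q A p'' p))) ` cobj (cauchy Q A))"
      by (rule cp_JI_r) (use SDf SDf[OF p'] CF[OF p] Ch[OF c _ p] in auto)
    also have "LE \<dots> (cc_hom Q A p' p)"
    proof (rule JI_least)
      fix p'' assume p'': "p'' \<in> cobj (cauchy Q A)"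
      have "cp (\<Phi> p') (cp (iv (\<Phi> p'')) (cc_hom Q A p'' p)) = cp (cp (\<Phi> p') (iv (\<Phi> p''))) (cc_hom Q A p'' p)"
        using SDf[OF p'] SDf[OF p''] Ch[OF c p'' p] by (simp add: assoc)
      also have "LE \<dots> (cp (cc_hom Q A p' p'') (cc_hom Q A p'' p))"
        by (rule LE_cp_r[OF LE_trans[OF S11[OF p'' p'] DDf(4)[OF p' p'']]])
          (use SDf[OF p'] SDf[OF p''] Ch[OF c p'' p] in auto)
      also have "LE \<dots> (cc_hom Q A p' p)" by (rule C_comp[OF c p p'' p'])
      finally show "LE (cp (\<Phi> p') (cp (iv (\<Phi> p'')) (cc_hom Q A p'' p))) (cc_hom Q A p' p)" .
    qed (use SDf SDf[OF p'] CF[OF p] CF[OF p'] Ch[OF c _ p] Ch[OF c p' p] in auto)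
    finally have "LE (iv (cp ?u (iv (\<Phi> p')))) (cc_hom Q A p' p)" .
    from LE_iv[OF this] show "LE (cp ?u (iv (\<Phi> p'))) (iv (chom (cauchy Q A) p' p))"
      using u SDf[OF p'] by simp
  qed
  have le: "LE ?u (\<Phi> p)"
  proof -
    have "?u = cp ?u (one X)" using u by simp
    also have "LE \<dots> (cp ?u (J X X ((\<lambda>p'. cp (iv (\<Phi> p')) (\<Phi> p')) ` cobj (cauchy Q A))))"
      by (rule LE_cp_l[OF S10]) (use u X in auto)
    also have "\<dots> = J X (fst p) ((\<lambda>p'. cp ?u (cp (iv (\<Phi> p')) (\<Phi> p'))) ` cobj (cauchy Q A))"
      by (rule cp_JI_r) (use u SDf X in auto)
    also have "LE \<dots> (\<Phi> p)"
    proof (rule JI_least)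
      fix p' assume p': "p' \<in> cobj (cauchy Q A)"
      have "cp ?u (cp (iv (\<Phi> p')) (\<Phi> p')) = cp (cp ?u (iv (\<Phi> p'))) (\<Phi> p')"
        using u SDf[OF p'] by (simp add: assoc)
      also have "LE \<dots> (cp (chom (symz Q (cauchy Q A)) p p') (\<Phi> p'))"
        by (rule LE_cp_r[OF key[OF p']]) (use u SDf[OF p'] in auto)
      also have "LE \<dots> (\<Phi> p)" by (rule S5[OF p' p])
      finally show "LE (cp ?u (cp (iv (\<Phi> p')) (\<Phi> p'))) (\<Phi> p)" .
    qed (use u SDf SDf[OF p] X CF[OF p] in auto)
    finally show ?thesis .
  qed
  show ?thesis using LE_antisym[OF ge le] by simp
qed

end

lemma part3: assumes q: "qcat Q A" shows "sym_complete Q (symz Q (cauchy Q A))"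
  unfolding sym_complete_def
proof (intro ballI allI impI)
  fix X \<Phi> assume X: "X \<in> Ob" and S: "sym_left_adj_presheaf Q (symz Q (cauchy Q A)) X \<Phi>"
  have SD: "ladj (symz Q (cauchy Q A)) X \<Phi> (\<lambda>p. iv (\<Phi> p))"
    by (rule slap_ladj[OF symz_ctyped[OF C_ctyped[OF qcat_ctyped[OF q]]] X S])
  show "\<exists>a\<in>cobj (symz Q (cauchy Q A)). ctype (symz Q (cauchy Q A)) a = X \<and>
          (\<forall>y\<in>cobj (symz Q (cauchy Q A)). \<Phi> y = chom (symz Q (cauchy Q A)) y a)"
  proof (rule bexI[where x="(X, Phc A \<Phi> X)"])
    show "(X, Phc A \<Phi> X) \<in> cobj (symz Q (cauchy Q A))" using rC[OF q X SD] by simp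
    show "ctype (symz Q (cauchy Q A)) (X, Phc A \<Phi> X) = X \<and>
      (\<forall>y\<in>cobj (symz Q (cauchy Q A)). \<Phi> y = chom (symz Q (cauchy Q A)) y (X, Phc A \<Phi> X))"
    proof (intro conjI ballI)
      show "ctype (symz Q (cauchy Q A)) (X, Phc A \<Phi> X) = X" by simp
      fix y assume "y \<in> cobj (symz Q (cauchy Q A))"
      then have y: "y \<in> cobj (cauchy Q A)" by simp
      show "\<Phi> y = chom (symz Q (cauchy Q A)) y (X, Phc A \<Phi> X)" by (rule rep[OF q X SD y])
    qed
  qed
qed

end

theorem proposition3p4:
  fixes Q :: "('o, 'm) iquantaloid" and A :: "('a, 'o, 'm) qcat"
  assumes "iquantaloid Q" and "qcat Q A"
  shows "full_embedding Q (symcomp Q (symz Q A)) (symz Q (cauchy Q A)) (Lmap Q A)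
    \<and> (\<forall>(B :: ('b, 'o, 'm) qcat) F. qcat Q B \<and> qfunctor Q A B F \<longrightarrow>
         (\<forall>p\<in>cobj (symcomp Q (symz Q A)).
            cc_map Q A B F (Lmap Q A p)
          = Lmap Q B (cc_map Q (symz Q A) (symz Q B) F p)))
    \<and> sym_complete Q (symz Q (cauchy Q A))"
proof -
  interpret IQ Q by (rule IQ.intro) (rule assms(1))
  show ?thesis using part1[OF assms(2)] part2[OF assms(2)] part3[OF assms(2)] by blast
qed

end
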